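(* Let $D$ be a $\ast$-IRKT. Then $D$ is an almost GCD domain if and only if for every $\ast$-super homog ideal $A$ of $D$ there is a positive integer $n$ such that $(A^n)^\ast$ is principal.
   Context: $\ast$ is a star operation on the integral domain $D$ of finite character. A $\ast$-ideal is a nonzero fractional ideal $I$ with $I^\ast=I$; of finite type if $I=J^\ast$ for some nonzero finitely generated $J$. A maximal $\ast$-ideal is an integral $\ast$-ideal maximal among proper integral $\ast$-ideals. $I$ is $\ast$-invertible if $(II^{-1})^\ast=D$. A $\ast$-super homog ideal is a proper integral $\ast$-ideal $I$ of finite type such that every $\ast$-ideal of finite type containing $I$ is $\ast$-invertible and $(A+B)^\ast\neq D$ for every pair $A,B$ of proper integral $\ast$-ideals of finite type containing $I$. $D$ is a $\ast$-IRKT if $D_P$ is a valuation domain for every maximal $\ast$-ideal $P$, $D=\bigcap_P D_P$ over the maximal $\ast$-ideals with the intersection locally finite, and no two distinct maximal $\ast$-ideals contain a common nonzero prime ideal. $D$ is an almost GCD (AGCD) domain if for every pair $a,b$ of nonzero elements there is $n\ge1$ such that $a^nD\cap b^nD$ is principal. *)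

theory Defs
  imports Main
begin

text \<open>Setting: the integral domain D is a subring of a field of type 'a which is
  its quotient field K. Fractional ideals are D-submodules of K.\<close>

definition subring :: "'a::field set \<Rightarrow> bool" where
  "subring D \<longleftrightarrow> 0 \<in> D \<and> 1 \<in> D \<and>
     (\<forall>x\<in>D. \<forall>y\<in>D. x + y \<in> D \<and> x * y \<in> D \<and> - x \<in> D)"

definition is_quotient_field_of :: "'a::field set \<Rightarrow> bool" where
  "is_quotient_field_of D \<longleftrightarrow> subring D \<and>
     (\<forall>z. \<exists>a\<in>D. \<exists>b\<in>D. b \<noteq> 0 \<and> z = a / b)"

definition dsubmodule :: "'a::field set \<Rightarrow> 'a set \<Rightarrow> bool" where
  "dsubmodule D I \<longleftrightarrow> 0 \<in> I \<and> (\<forall>x\<in>I. \<forall>y\<in>I. x + y \<in> I) \<and> (\<forall>d\<in>D. \<forall>x\<in>I. d * x \<in> I)"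

definition frac_ideal :: "'a::field set \<Rightarrow> 'a set \<Rightarrow> bool" where
  "frac_ideal D I \<longleftrightarrow> dsubmodule D I \<and> (\<exists>d\<in>D. d \<noteq> 0 \<and> (\<forall>x\<in>I. d * x \<in> D))"

definition nz_frac_ideal :: "'a::field set \<Rightarrow> 'a set \<Rightarrow> bool" where
  "nz_frac_ideal D I \<longleftrightarrow> frac_ideal D I \<and> I \<noteq> {0}"

definition smul :: "'a::field \<Rightarrow> 'a set \<Rightarrow> 'a set" where
  "smul x I = (\<lambda>y. x * y) ` I"

definition gen :: "'a::field set \<Rightarrow> 'a set \<Rightarrow> 'a set" where
  "gen D S = \<Inter> {M. dsubmodule D M \<and> S \<subseteq> M}"

definition nz_fg_ideal :: "'a::field set \<Rightarrow> 'a set \<Rightarrow> bool" where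
  "nz_fg_ideal D J \<longleftrightarrow> (\<exists>S. finite S \<and> J = gen D S) \<and> J \<noteq> {0}"

definition star_operation :: "'a::field set \<Rightarrow> ('a set \<Rightarrow> 'a set) \<Rightarrow> bool" where
  "star_operation D st \<longleftrightarrow>
     (\<forall>x. x \<noteq> 0 \<longrightarrow> st (smul x D) = smul x D) \<and>
     (\<forall>x I. x \<noteq> 0 \<and> nz_frac_ideal D I \<longrightarrow> st (smul x I) = smul x (st I)) \<and>
     (\<forall>I. nz_frac_ideal D I \<longrightarrow> nz_frac_ideal D (st I) \<and> I \<subseteq> st I) \<and>
     (\<forall>I J. nz_frac_ideal D I \<and> nz_frac_ideal D J \<and> I \<subseteq> J \<longrightarrow> st I \<subseteq> st J) \<and>
     (\<forall>I. nz_frac_ideal D I \<longrightarrow> st (st I) = st I)"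

definition finite_character :: "'a::field set \<Rightarrow> ('a set \<Rightarrow> 'a set) \<Rightarrow> bool" where
  "finite_character D st \<longleftrightarrow>
     (\<forall>I. nz_frac_ideal D I \<longrightarrow> st I = \<Union> {st J | J. nz_fg_ideal D J \<and> J \<subseteq> I})"

definition star_ideal :: "'a::field set \<Rightarrow> ('a set \<Rightarrow> 'a set) \<Rightarrow> 'a set \<Rightarrow> bool" where
  "star_ideal D st I \<longleftrightarrow> nz_frac_ideal D I \<and> st I = I"

definition finite_type :: "'a::field set \<Rightarrow> ('a set \<Rightarrow> 'a set) \<Rightarrow> 'a set \<Rightarrow> bool" where
  "finite_type D st I \<longleftrightarrow> star_ideal D st I \<and> (\<exists>J. nz_fg_ideal D J \<and> I = st J)"

definition max_star_ideal :: "'a::field set \<Rightarrow> ('a set \<Rightarrow> 'a set) \<Rightarrow> 'a set \<Rightarrow> bool" where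
  "max_star_ideal D st P \<longleftrightarrow> star_ideal D st P \<and> P \<subseteq> D \<and> P \<noteq> D \<and>
     (\<forall>Q. star_ideal D st Q \<and> Q \<subseteq> D \<and> Q \<noteq> D \<and> P \<subseteq> Q \<longrightarrow> Q = P)"

definition ideal_mult :: "'a::field set \<Rightarrow> 'a set \<Rightarrow> 'a set \<Rightarrow> 'a set" where
  "ideal_mult D I J = gen D {a * b | a b. a \<in> I \<and> b \<in> J}"

definition ideal_sum :: "'a::field set \<Rightarrow> 'a set \<Rightarrow> 'a set \<Rightarrow> 'a set" where
  "ideal_sum D I J = gen D (I \<union> J)"

definition finv :: "'a::field set \<Rightarrow> 'a set \<Rightarrow> 'a set" where
  "finv D I = {x. \<forall>y\<in>I. x * y \<in> D}"

primrec ipow :: "'a::field set \<Rightarrow> 'a set \<Rightarrow> nat \<Rightarrow> 'a set" where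
  "ipow D A 0 = D"
| "ipow D A (Suc n) = ideal_mult D A (ipow D A n)"

definition star_invertible :: "'a::field set \<Rightarrow> ('a set \<Rightarrow> 'a set) \<Rightarrow> 'a set \<Rightarrow> bool" where
  "star_invertible D st I \<longleftrightarrow> st (ideal_mult D I (finv D I)) = D"

definition super_homog :: "'a::field set \<Rightarrow> ('a set \<Rightarrow> 'a set) \<Rightarrow> 'a set \<Rightarrow> bool" where
  "super_homog D st I \<longleftrightarrow> I \<subseteq> D \<and> I \<noteq> D \<and> finite_type D st I \<and>
     (\<forall>J. finite_type D st J \<and> I \<subseteq> J \<longrightarrow> star_invertible D st J) \<and>
     (\<forall>A B. finite_type D st A \<and> A \<subseteq> D \<and> A \<noteq> D \<and> I \<subseteq> A \<and>
            finite_type D st B \<and> B \<subseteq> D \<and> B \<noteq> D \<and> I \<subseteq> B \<longrightarrow>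
            st (ideal_sum D A B) \<noteq> D)"

definition localization :: "'a::field set \<Rightarrow> 'a set \<Rightarrow> 'a set" where
  "localization D P = {x. \<exists>s\<in>D - P. s * x \<in> D}"

definition valuation_domain :: "'a::field set \<Rightarrow> bool" where
  "valuation_domain V \<longleftrightarrow> subring V \<and> (\<forall>x. x \<noteq> 0 \<longrightarrow> x \<in> V \<or> inverse x \<in> V)"

definition prime_ideal :: "'a::field set \<Rightarrow> 'a set \<Rightarrow> bool" where
  "prime_ideal D R \<longleftrightarrow> R \<subseteq> D \<and> dsubmodule D R \<and> R \<noteq> D \<and>
     (\<forall>a\<in>D. \<forall>b\<in>D. a * b \<in> R \<longrightarrow> a \<in> R \<or> b \<in> R)"

definition star_IRKT :: "'a::field set \<Rightarrow> ('a set \<Rightarrow> 'a set) \<Rightarrow> bool" where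
  "star_IRKT D st \<longleftrightarrow>
     (\<forall>P. max_star_ideal D st P \<longrightarrow> valuation_domain (localization D P)) \<and>
     D = \<Inter> {localization D P | P. max_star_ideal D st P} \<and>
     (\<forall>x\<in>D. x \<noteq> 0 \<longrightarrow> finite {P. max_star_ideal D st P \<and> x \<in> P}) \<and>
     (\<forall>P Q. max_star_ideal D st P \<and> max_star_ideal D st Q \<and> P \<noteq> Q \<longrightarrow>
        \<not> (\<exists>R. prime_ideal D R \<and> R \<noteq> {0} \<and> R \<subseteq> P \<and> R \<subseteq> Q))"

definition AGCD :: "'a::field set \<Rightarrow> bool" where
  "AGCD D \<longleftrightarrow> (\<forall>a\<in>D. \<forall>b\<in>D. a \<noteq> 0 \<and> b \<noteq> 0 \<longrightarrow>
     (\<exists>n\<ge>1. \<exists>c\<in>D. smul (a ^ n) D \<inter> smul (b ^ n) D = smul c D))"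

end

theory Submission
  imports Defs
begin


locale irkt =
  fixes D :: "'a::field set" and st :: "'a set \<Rightarrow> 'a set"
  assumes qf: "is_quotient_field_of D"
    and so: "star_operation D st"
    and fc: "finite_character D st"
    and ir: "star_IRKT D st"
begin

abbreviation "MX P \<equiv> max_star_ideal D st P"
abbreviation "V P \<equiv> localization D P"

lemma sr: "subring D" using qf by (simp add: is_quotient_field_of_def)
lemma D0: "0 \<in> D" and D1: "1 \<in> D" using sr by (auto simp: subring_def)
lemma Dadd: "x \<in> D \<Longrightarrow> y \<in> D \<Longrightarrow> x + y \<in> D" using sr by (auto simp: subring_def)
lemma Dmul: "x \<in> D \<Longrightarrow> y \<in> D \<Longrightarrow> x * y \<in> D" using sr by (auto simp: subring_def)
lemma Dneg: "x \<in> D \<Longrightarrow> - x \<in> D" using sr by (auto simp: subring_def)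
lemma Dpow: "x \<in> D \<Longrightarrow> x ^ n \<in> D" by (induct n) (auto simp: D1 Dmul)
lemma Dquot: "\<exists>a\<in>D. \<exists>b\<in>D. b \<noteq> 0 \<and> z = a / b" using qf by (simp add: is_quotient_field_of_def)

lemma dsub_D: "dsubmodule D D" by (simp add: dsubmodule_def D0 Dadd Dmul)

lemma gen_sub: "dsubmodule D (gen D S)"
  unfolding gen_def dsubmodule_def by auto
lemma gen_incl: "S \<subseteq> gen D S" unfolding gen_def by auto
lemma gen_min: "dsubmodule D M \<Longrightarrow> S \<subseteq> M \<Longrightarrow> gen D S \<subseteq> M" unfolding gen_def by auto
lemma gen_mono: "S \<subseteq> T \<Longrightarrow> gen D S \<subseteq> gen D T"
  by (meson gen_incl gen_min gen_sub order_trans)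

lemma dsub_mult: "dsubmodule D I \<Longrightarrow> d \<in> D \<Longrightarrow> x \<in> I \<Longrightarrow> d * x \<in> I"
  by (simp add: dsubmodule_def)
lemma dsub_add: "dsubmodule D I \<Longrightarrow> x \<in> I \<Longrightarrow> y \<in> I \<Longrightarrow> x + y \<in> I"
  by (simp add: dsubmodule_def)
lemma dsub_0: "dsubmodule D I \<Longrightarrow> 0 \<in> I"
  by (simp add: dsubmodule_def)

lemma common_denom:
  assumes "finite S" shows "\<exists>d\<in>D. d \<noteq> 0 \<and> (\<forall>s\<in>S. d * s \<in> D)"
  using assms
proof (induct S)
  case empty then show ?case using D1 by (intro bexI[of _ 1]) auto
next
  case (insert x S)
  then obtain d where d: "d \<in> D" "d \<noteq> 0" "\<forall>s\<in>S. d * s \<in> D" by auto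
  obtain a b where ab: "a \<in> D" "b \<in> D" "b \<noteq> 0" "x = a / b" using Dquot by blast
  have "b * d * x = d * a" using ab by (simp add: field_simps)
  moreover have "\<forall>s\<in>S. b * d * s \<in> D" using d ab
    by (metis Dmul mult.assoc)
  ultimately show ?case using d ab Dmul
    by (metis insert_iff mult_eq_0_iff)
qed

lemma dsub_scaled: "dsubmodule D {y. c * y \<in> D}"
  unfolding dsubmodule_def by (auto simp: D0 Dadd Dmul distrib_left)
    (metis Dmul mult.left_commute)

lemma gen_frac: assumes "finite S" shows "frac_ideal D (gen D S)"
proof -
  obtain d where d: "d \<in> D" "d \<noteq> 0" "\<forall>s\<in>S. d * s \<in> D" using common_denom[OF assms] by blast
  have "gen D S \<subseteq> {y. d * y \<in> D}" using d by (intro gen_min dsub_scaled) auto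
  then show ?thesis using d gen_sub by (auto simp: frac_ideal_def)
qed

lemma gen_zero: "(\<forall>s\<in>S. s = 0) \<Longrightarrow> gen D S = {0}"
proof -
  assume a: "\<forall>s\<in>S. s = 0"
  have "gen D S \<subseteq> {0}" using a by (intro gen_min) (auto simp: dsubmodule_def)
  then show ?thesis using gen_sub dsub_0 by blast
qed

lemma nzfg_nzfrac: "nz_fg_ideal D J \<Longrightarrow> nz_frac_ideal D J"
  unfolding nz_fg_ideal_def nz_frac_ideal_def using gen_frac by auto

lemma nzfrac_sub_D: "dsubmodule D I \<Longrightarrow> I \<subseteq> D \<Longrightarrow> I \<noteq> {0} \<Longrightarrow> nz_frac_ideal D I"
  unfolding nz_frac_ideal_def frac_ideal_def using D1 by force

lemma nzfrac_D: "nz_frac_ideal D D"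
  using nzfrac_sub_D[OF dsub_D] D1 by (metis singletonD one_neq_zero order_refl)

lemma st_princ: "x \<noteq> 0 \<Longrightarrow> st (smul x D) = smul x D" using so by (simp add: star_operation_def)
lemma st_smul: "x \<noteq> 0 \<Longrightarrow> nz_frac_ideal D I \<Longrightarrow> st (smul x I) = smul x (st I)" using so by (simp add: star_operation_def)
lemma st_nz: "nz_frac_ideal D I \<Longrightarrow> nz_frac_ideal D (st I)" using so by (simp add: star_operation_def)
lemma st_ext: "nz_frac_ideal D I \<Longrightarrow> I \<subseteq> st I" using so by (simp add: star_operation_def)
lemma st_mono: "nz_frac_ideal D I \<Longrightarrow> nz_frac_ideal D J \<Longrightarrow> I \<subseteq> J \<Longrightarrow> st I \<subseteq> st J" using so by (simp add: star_operation_def)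
lemma st_idem: "nz_frac_ideal D I \<Longrightarrow> st (st I) = st I" using so by (simp add: star_operation_def)
lemma st_D: "st D = D" using st_princ[of 1] by (simp add: smul_def)
lemma st_sub: "nz_frac_ideal D I \<Longrightarrow> dsubmodule D (st I)"
  using st_nz by (simp add: nz_frac_ideal_def frac_ideal_def)
lemma st_subD: "nz_frac_ideal D I \<Longrightarrow> I \<subseteq> D \<Longrightarrow> st I \<subseteq> D"
  using st_mono[OF _ nzfrac_D] st_D by auto

lemma smul_mem: "y \<in> smul x I \<longleftrightarrow> (\<exists>d\<in>I. y = x * d)"
  by (auto simp: smul_def)

lemma dsub_smul: "dsubmodule D (smul x D)"
  unfolding dsubmodule_def
proof (intro conjI ballI)
  show "0 \<in> smul x D" using D0 smul_mem by fastforce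
next
  fix u v assume "u \<in> smul x D" "v \<in> smul x D"
  then obtain d e where "d \<in> D" "e \<in> D" "u = x * d" "v = x * e" by (auto simp: smul_mem)
  then show "u + v \<in> smul x D" unfolding smul_mem by (intro bexI[of _ "d + e"]) (auto simp: distrib_left Dadd)
next
  fix c u assume "c \<in> D" "u \<in> smul x D"
  then obtain d where "d \<in> D" "u = x * d" by (auto simp: smul_mem)
  then show "c * u \<in> smul x D" unfolding smul_mem using \<open>c \<in> D\<close> by (intro bexI[of _ "c * d"]) (auto simp: Dmul)
qed

lemma smulD_nz: assumes x: "x \<noteq> 0" shows "nz_frac_ideal D (smul x D)"
proof -
  obtain a b where ab: "a \<in> D" "b \<in> D" "b \<noteq> 0" "x = a / b" using Dquot by blast
  have "\<forall>y\<in>smul x D. b * y \<in> D"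
  proof
    fix y assume "y \<in> smul x D"
    then obtain d where d: "d \<in> D" "y = x * d" by (auto simp: smul_mem)
    have "b * y = a * d" using ab d by simp
    then show "b * y \<in> D" using ab d Dmul by simp
  qed
  moreover have "x \<in> smul x D" using D1 smul_mem by fastforce
  ultimately show ?thesis using dsub_smul ab x unfolding nz_frac_ideal_def frac_ideal_def by auto
qed

lemma MX_sub: "MX P \<Longrightarrow> P \<subseteq> D" and MX_ne: "MX P \<Longrightarrow> P \<noteq> D"
  and MX_star: "MX P \<Longrightarrow> star_ideal D st P"
  by (auto simp: max_star_ideal_def)
lemma MX_nz: "MX P \<Longrightarrow> nz_frac_ideal D P" using MX_star by (simp add: star_ideal_def)
lemma MX_st: "MX P \<Longrightarrow> st P = P" using MX_star by (simp add: star_ideal_def)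
lemma MX_dsub: "MX P \<Longrightarrow> dsubmodule D P" using MX_nz by (simp add: nz_frac_ideal_def frac_ideal_def)
lemma MX_0: "MX P \<Longrightarrow> 0 \<in> P" using MX_dsub dsub_0 by blast
lemma MX_1: assumes "MX P" shows "1 \<notin> P"
proof
  assume "1 \<in> P"
  then have "D \<subseteq> P" using dsub_mult[OF MX_dsub[OF assms]] by force
  then show False using MX_sub[OF assms] MX_ne[OF assms] by blast
qed
lemma MX_max: "MX P \<Longrightarrow> MX Q \<Longrightarrow> P \<subseteq> Q \<Longrightarrow> Q = P"
  unfolding max_star_ideal_def by blast

lemma V_val: "MX P \<Longrightarrow> valuation_domain (V P)" using ir by (simp add: star_IRKT_def)
lemma V_sr: "MX P \<Longrightarrow> subring (V P)" using V_val by (simp add: valuation_domain_def)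
lemma V_mul: "MX P \<Longrightarrow> x \<in> V P \<Longrightarrow> y \<in> V P \<Longrightarrow> x * y \<in> V P" using V_sr by (simp add: subring_def)
lemma V_add: "MX P \<Longrightarrow> x \<in> V P \<Longrightarrow> y \<in> V P \<Longrightarrow> x + y \<in> V P" using V_sr by (simp add: subring_def)
lemma V_pow: "MX P \<Longrightarrow> x \<in> V P \<Longrightarrow> x ^ n \<in> V P"
  by (induct n) (auto simp: V_mul V_sr[THEN subring_def[THEN iffD1]])
lemma V_mem: "y \<in> V P \<longleftrightarrow> (\<exists>s\<in>D - P. s * y \<in> D)" by (simp add: localization_def)
lemma D_V: "MX P \<Longrightarrow> y \<in> D \<Longrightarrow> y \<in> V P"
  unfolding V_mem using MX_1 D1 by (intro bexI[of _ 1]) auto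
lemma V_inv: "MX P \<Longrightarrow> s \<in> D \<Longrightarrow> s \<notin> P \<Longrightarrow> 1 / s \<in> V P"
proof -
  assume a: "MX P" "s \<in> D" "s \<notin> P"
  then have "s \<noteq> 0" using MX_0 by auto
  then show ?thesis unfolding V_mem using a D1 by (intro bexI[of _ s]) auto
qed
lemma V_dich: "MX P \<Longrightarrow> x / y \<in> V P \<or> y / x \<in> V P"
proof -
  assume P: "MX P"
  show ?thesis
  proof (cases "x = 0 \<or> y = 0")
    case True then show ?thesis using D_V[OF P D0] by auto
  next
    case False
    then have "x / y \<noteq> 0" by simp
    then have "x / y \<in> V P \<or> inverse (x / y) \<in> V P" using V_val[OF P] unfolding valuation_domain_def by blast
    then show ?thesis by (metis inverse_divide)
  qed
qed
lemma V_trans: "MX P \<Longrightarrow> x / y \<in> V P \<Longrightarrow> y / z \<in> V P \<Longrightarrow> y \<noteq> 0 \<Longrightarrow> x / z \<in> V P"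
proof -
  assume a: "MX P" "x / y \<in> V P" "y / z \<in> V P" "y \<noteq> 0"
  have e: "x / z = (x / y) * (y / z)" using a by simp
  show ?thesis by (subst e) (rule V_mul[OF a(1) a(2) a(3)])
qed

lemma MX_prime: assumes P: "MX P" and ab: "a \<in> D" "b \<in> D" "a * b \<in> P" shows "a \<in> P \<or> b \<in> P"
proof (rule ccontr)
  assume "\<not> (a \<in> P \<or> b \<in> P)"
  then have n: "a \<notin> P" "b \<notin> P" by auto
  have "1 / a * (1 / b) \<in> V P" using V_inv[OF P] ab n V_mul[OF P] by blast
  then obtain u where u: "u \<in> D" "u \<notin> P" "u * (1 / a * (1 / b)) \<in> D" unfolding V_mem by blast
  have "a \<noteq> 0" "b \<noteq> 0" using n MX_0[OF P] by auto
  then have "u = (a * b) * (u * (1 / a * (1 / b)))" by simp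
  also have "\<dots> \<in> P" using u ab dsub_mult[OF MX_dsub[OF P]] by (metis mult.commute)
  finally show False using u by simp
qed

lemma V_divD: "MX P \<Longrightarrow> x \<in> D \<Longrightarrow> x / y \<in> V P \<Longrightarrow> y \<in> P \<Longrightarrow> y \<in> D \<Longrightarrow> y \<noteq> 0 \<Longrightarrow> x \<in> P"
proof -
  assume a: "MX P" "x \<in> D" "x / y \<in> V P" "y \<in> P" "y \<in> D" "y \<noteq> 0"
  then obtain s where s: "s \<in> D" "s \<notin> P" "s * (x / y) \<in> D" unfolding V_mem by blast
  have "s * x = y * (s * (x / y))" using a by simp
  also have "\<dots> \<in> P" using a s dsub_mult[OF MX_dsub[OF a(1)]] by (metis mult.commute)
  finally show "x \<in> P" using MX_prime[OF a(1) s(1) a(2)] s by blast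
qed

lemma D_eq: "y \<in> D \<longleftrightarrow> (\<forall>P. MX P \<longrightarrow> y \<in> V P)"
proof -
  have e: "D = \<Inter> {V P | P. MX P}" using ir by (simp add: star_IRKT_def)
  show ?thesis by (subst e) blast
qed

lemma loc_fin: "x \<in> D \<Longrightarrow> x \<noteq> 0 \<Longrightarrow> finite {P. MX P \<and> x \<in> P}"
  using ir by (simp add: star_IRKT_def)

lemma indep: "MX P \<Longrightarrow> MX Q \<Longrightarrow> P \<noteq> Q \<Longrightarrow> prime_ideal D R \<Longrightarrow> R \<noteq> {0} \<Longrightarrow> R \<subseteq> P \<Longrightarrow> R \<subseteq> Q \<Longrightarrow> False"
  using ir unfolding star_IRKT_def by blast

lemma exists_MX:
  assumes C: "nz_frac_ideal D C" "C \<subseteq> D" "st C \<noteq> D"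
  shows "\<exists>P. MX P \<and> st C \<subseteq> P"
proof -
  define A where "A = {Q. star_ideal D st Q \<and> Q \<subseteq> D \<and> Q \<noteq> D \<and> st C \<subseteq> Q}"
  have stC: "star_ideal D st (st C)" using st_nz st_idem C by (simp add: star_ideal_def)
  have "st C \<in> A" using stC C st_subD unfolding A_def by auto
  then have ne: "A \<noteq> {}" by blast
  have "\<exists>M\<in>A. \<forall>X\<in>A. M \<subseteq> X \<longrightarrow> X = M"
  proof (rule subset_Zorn_nonempty[OF ne])
    fix Cs assume Cne: "Cs \<noteq> {}" and ch: "subset.chain A Cs"
    have CA: "Cs \<subseteq> A" and tot: "\<forall>X\<in>Cs. \<forall>Y\<in>Cs. X \<subseteq> Y \<or> Y \<subseteq> X" using ch by (auto simp: subset_chain_def)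
    let ?U = "\<Union>Cs"
    have mem: "Q \<in> Cs \<Longrightarrow> dsubmodule D Q \<and> Q \<subseteq> D \<and> 1 \<notin> Q \<and> st Q = Q \<and> st C \<subseteq> Q" for Q
    proof -
      assume "Q \<in> Cs"
      then have q: "star_ideal D st Q" "Q \<subseteq> D" "Q \<noteq> D" "st C \<subseteq> Q" using CA A_def by auto
      then have ds: "dsubmodule D Q" by (simp add: star_ideal_def nz_frac_ideal_def frac_ideal_def)
      have "1 \<notin> Q"
      proof
        assume "1 \<in> Q" then have "D \<subseteq> Q" using dsub_mult[OF ds] by force
        then show False using q by blast
      qed
      then show ?thesis using q ds by (simp add: star_ideal_def)
    qed
    have dsU: "dsubmodule D ?U"
      unfolding dsubmodule_def
    proof (intro conjI ballI)
      show "0 \<in> ?U" using Cne mem dsub_0 by blast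
    next
      fix x y assume "x \<in> ?U" "y \<in> ?U"
      then obtain X Y where XY: "X \<in> Cs" "Y \<in> Cs" "x \<in> X" "y \<in> Y" by blast
      show "x + y \<in> ?U"
      proof (cases "X \<subseteq> Y")
        case True then show ?thesis using XY mem dsub_add by blast
      next
        case False then have "Y \<subseteq> X" using tot XY by blast
        then show ?thesis using XY mem dsub_add by blast
      qed
    next
      fix d x assume "d \<in> D" "x \<in> ?U"
      then show "d * x \<in> ?U" using mem dsub_mult by blast
    qed
    have UD: "?U \<subseteq> D" using mem by blast
    have stCU: "st C \<subseteq> ?U" using Cne mem by blast
    have "st C \<noteq> {0}" using st_nz[OF C(1)] by (simp add: nz_frac_ideal_def)
    then have Unz: "?U \<noteq> {0}" using stCU st_sub[OF C(1)] dsub_0 by blast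
    have nzU: "nz_frac_ideal D ?U" using nzfrac_sub_D dsU UD Unz by blast
    have "st ?U \<subseteq> ?U"
    proof
      fix x assume "x \<in> st ?U"
      then obtain J where J: "nz_fg_ideal D J" "J \<subseteq> ?U" "x \<in> st J"
        using fc nzU unfolding finite_character_def by blast
      obtain S where S: "finite S" "J = gen D S" using J unfolding nz_fg_ideal_def by blast
      have "S \<subseteq> ?U" using S J gen_incl by blast
      then obtain Q where Q: "Q \<in> Cs" "S \<subseteq> Q" using finite_subset_Union_chain[OF S(1) _ Cne ch] by blast
      have "J \<subseteq> Q" using S Q mem gen_min by blast
      moreover have "nz_frac_ideal D Q" using Q CA unfolding A_def star_ideal_def by blast
      ultimately have "st J \<subseteq> st Q" using st_mono nzfg_nzfrac J by blast
      then show "x \<in> ?U" using J Q mem by blast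
    qed
    then have "st ?U = ?U" using st_ext[OF nzU] by blast
    moreover have "?U \<noteq> D" using mem D1 by blast
    ultimately show "?U \<in> A" unfolding A_def star_ideal_def using nzU UD stCU by blast
  qed
  then obtain M where M: "M \<in> A" "\<forall>X\<in>A. M \<subseteq> X \<longrightarrow> X = M" by blast
  have "MX M" unfolding max_star_ideal_def
  proof (intro conjI allI impI)
    show "star_ideal D st M" "M \<subseteq> D" "M \<noteq> D" using M A_def by auto
  next
    fix Q assume "star_ideal D st Q \<and> Q \<subseteq> D \<and> Q \<noteq> D \<and> M \<subseteq> Q"
    then have "Q \<in> A" using M unfolding A_def by blast
    then show "Q = M" using M \<open>star_ideal D st Q \<and> Q \<subseteq> D \<and> Q \<noteq> D \<and> M \<subseteq> Q\<close> by blast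
  qed
  then show ?thesis using M A_def by auto
qed


lemma smul_nz: assumes x: "x \<noteq> 0" and I: "nz_frac_ideal D I" shows "nz_frac_ideal D (smul x I)"
proof -
  have ds: "dsubmodule D I" and fr: "\<exists>d\<in>D. d \<noteq> 0 \<and> (\<forall>y\<in>I. d * y \<in> D)" and nz: "I \<noteq> {0}"
    using I by (auto simp: nz_frac_ideal_def frac_ideal_def)
  have dss: "dsubmodule D (smul x I)" unfolding dsubmodule_def
  proof (intro conjI ballI)
    show "0 \<in> smul x I" using dsub_0[OF ds] smul_mem by fastforce
  next
    fix u v assume "u \<in> smul x I" "v \<in> smul x I"
    then obtain d e where "d \<in> I" "e \<in> I" "u = x * d" "v = x * e" by (auto simp: smul_mem)
    then show "u + v \<in> smul x I" unfolding smul_mem using dsub_add[OF ds] by (intro bexI[of _ "d + e"]) (auto simp: distrib_left)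
  next
    fix c u assume "c \<in> D" "u \<in> smul x I"
    then obtain d where "d \<in> I" "u = x * d" by (auto simp: smul_mem)
    then show "c * u \<in> smul x I" unfolding smul_mem using \<open>c \<in> D\<close> dsub_mult[OF ds] by (intro bexI[of _ "c * d"]) (auto simp: algebra_simps)
  qed
  obtain d where d: "d \<in> D" "d \<noteq> 0" "\<forall>y\<in>I. d * y \<in> D" using fr by blast
  obtain a b where ab: "a \<in> D" "b \<in> D" "b \<noteq> 0" "x = a / b" using Dquot by blast
  have "\<forall>y\<in>smul x I. (b * d) * y \<in> D"
  proof
    fix y assume "y \<in> smul x I"
    then obtain i where i: "i \<in> I" "y = x * i" by (auto simp: smul_mem)
    have e: "(b * d) * y = a * (d * i)" using ab i by simp
    have "d * i \<in> D" using d i by blast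
    then have "a * (d * i) \<in> D" using ab Dmul by blast
    then show "(b * d) * y \<in> D" by (simp only: e)
  qed
  moreover have "b * d \<in> D" "b * d \<noteq> 0" using ab d Dmul by auto
  moreover obtain i where "i \<in> I" "i \<noteq> 0" using nz dsub_0[OF ds] by blast
  then have "x * i \<in> smul x I" "x * i \<noteq> 0" using x smul_mem by auto
  ultimately show ?thesis using dss unfolding nz_frac_ideal_def frac_ideal_def by blast
qed

lemma min_elem:
  assumes P: "MX P" and "finite S" shows "(\<exists>s\<in>S. s \<noteq> 0) \<Longrightarrow> \<exists>g\<in>S. g \<noteq> 0 \<and> (\<forall>s\<in>S. s / g \<in> V P)"
  using assms(2)
proof (induct S)
  case empty then show ?case by simp
next
  case (insert x S)
  show ?case
  proof (cases "\<exists>s\<in>S. s \<noteq> 0")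
    case True
    then obtain g where g: "g \<in> S" "g \<noteq> 0" "\<forall>s\<in>S. s / g \<in> V P" using insert by blast
    show ?thesis
    proof (cases "x / g \<in> V P")
      case True then show ?thesis using g by auto
    next
      case False
      then have gx: "g / x \<in> V P" using V_dich[OF P] by blast
      have x0: "x \<noteq> 0" using False D_V[OF P D0] by auto
      have "\<forall>s\<in>insert x S. s / x \<in> V P"
      proof
        fix s assume "s \<in> insert x S"
        then show "s / x \<in> V P"
        proof
          assume "s = x" then show ?thesis using x0 D_V[OF P D1] by simp
        next
          assume "s \<in> S" then show ?thesis using g gx V_trans[OF P] by blast
        qed
      qed
      then show ?thesis using x0 by blast
    qed
  next
    case False
    then have x0: "x \<noteq> 0" using insert by auto
    have "\<forall>s\<in>insert x S. s / x \<in> V P" using False x0 D_V[OF P D1] D_V[OF P D0] by auto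
    then show ?thesis using x0 by blast
  qed
qed

lemma CD:
  assumes P: "MX P" and "finite S" shows "(\<forall>s\<in>S. s / g \<in> V P) \<Longrightarrow> \<exists>u\<in>D - P. \<forall>s\<in>S. u * (s / g) \<in> D"
  using assms(2)
proof (induct S)
  case empty then show ?case using D1 MX_1[OF P] by (intro bexI[of _ 1]) auto
next
  case (insert x S)
  then obtain u where u: "u \<in> D - P" "\<forall>s\<in>S. u * (s / g) \<in> D" by auto
  obtain t where t: "t \<in> D" "t \<notin> P" "t * (x / g) \<in> D" using insert(4) unfolding V_mem by blast
  have "u * t \<in> D - P" using u t Dmul MX_prime[OF P] by blast
  moreover have "\<forall>s\<in>insert x S. (u * t) * (s / g) \<in> D"
  proof
    fix s assume "s \<in> insert x S"
    then show "(u * t) * (s / g) \<in> D"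
    proof
      assume "s = x" then show ?thesis using u t Dmul by (metis Diff_iff mult.assoc)
    next
      assume "s \<in> S" then show ?thesis using u t Dmul by (metis mult.commute mult.left_commute)
    qed
  qed
  ultimately show ?case by blast
qed

lemma Loc_core:
  assumes P: "MX P" and S: "finite S" "gen D S \<noteq> {0}" and g: "g \<noteq> 0" and Sg: "\<forall>s\<in>S. s / g \<in> V P"
  shows "\<exists>u\<in>D - P. \<forall>y\<in>st (gen D S). u * y / g \<in> D"
proof -
  obtain u where u: "u \<in> D - P" "\<forall>s\<in>S. u * (s / g) \<in> D" using CD[OF P S(1) Sg] by blast
  have u0: "u \<noteq> 0" using u MX_0[OF P] by auto
  have nzJ: "nz_frac_ideal D (gen D S)" using gen_frac[OF S(1)] S(2) by (simp add: nz_frac_ideal_def)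
  have "gen D S \<subseteq> {y. (u / g) * y \<in> D}" using u by (intro gen_min dsub_scaled) auto
  then have sub: "smul u (gen D S) \<subseteq> smul g D"
  proof (intro subsetI)
    fix z assume a: "gen D S \<subseteq> {y. (u / g) * y \<in> D}" "z \<in> smul u (gen D S)"
    then obtain y where y: "y \<in> gen D S" "z = u * y" by (auto simp: smul_mem)
    have "z = g * ((u / g) * y)" using y g by simp
    then show "z \<in> smul g D" using a y smul_mem by blast
  qed
  have "st (smul u (gen D S)) \<subseteq> st (smul g D)"
    using st_mono[OF smul_nz[OF u0 nzJ] smulD_nz[OF g] sub] .
  then have "smul u (st (gen D S)) \<subseteq> smul g D" using st_smul[OF u0 nzJ] st_princ[OF g] by simp
  then have "\<forall>y\<in>st (gen D S). u * y / g \<in> D"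
  proof (intro ballI)
    fix y assume a: "smul u (st (gen D S)) \<subseteq> smul g D" "y \<in> st (gen D S)"
    then have "u * y \<in> smul g D" using smul_mem by blast
    then obtain e where "e \<in> D" "u * y = g * e" by (auto simp: smul_mem)
    then show "u * y / g \<in> D" using g by simp
  qed
  then show ?thesis using u by blast
qed

lemma LocI:
  assumes P: "MX P" and I: "nz_frac_ideal D I" and g: "g \<noteq> 0" and Ig: "\<forall>y\<in>I. y / g \<in> V P"
  shows "\<forall>y\<in>st I. y / g \<in> V P"
proof
  fix x assume "x \<in> st I"
  then obtain J where J: "nz_fg_ideal D J" "J \<subseteq> I" "x \<in> st J"
    using fc I unfolding finite_character_def by blast
  obtain S where S: "finite S" "J = gen D S" "J \<noteq> {0}" using J unfolding nz_fg_ideal_def by blast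
  have "\<forall>s\<in>S. s / g \<in> V P" using S J Ig gen_incl by blast
  then obtain u where u: "u \<in> D - P" "\<forall>y\<in>st (gen D S). u * y / g \<in> D"
    using Loc_core[OF P S(1) _ g] S by auto
  have "u * (x / g) \<in> D" using u J S by (metis times_divide_eq_right)
  then show "x / g \<in> V P" using u unfolding V_mem by blast
qed

lemma G:
  assumes I: "nz_frac_ideal D I" and loc: "\<forall>P. MX P \<longrightarrow> (\<exists>s\<in>D - P. s * z \<in> I)"
  shows "z \<in> st I"
proof (cases "z = 0")
  case True then show ?thesis using st_sub[OF I] dsub_0 by blast
next
  case z0: False
  have ds: "dsubmodule D I" and nz: "I \<noteq> {0}" and fr: "\<exists>d\<in>D. d \<noteq> 0 \<and> (\<forall>y\<in>I. d * y \<in> D)"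
    using I by (auto simp: nz_frac_ideal_def frac_ideal_def)
  define C where "C = {d \<in> D. d * z \<in> I}"
  have dsC: "dsubmodule D C" unfolding dsubmodule_def
  proof (intro conjI ballI)
    show "0 \<in> C" unfolding C_def using D0 dsub_0[OF ds] by simp
  next
    fix x y assume "x \<in> C" "y \<in> C"
    then show "x + y \<in> C" unfolding C_def using Dadd dsub_add[OF ds] by (simp add: distrib_right)
  next
    fix c x assume "c \<in> D" "x \<in> C"
    then show "c * x \<in> C" unfolding C_def using Dmul dsub_mult[OF ds] by (simp add: mult.assoc)
  qed
  obtain i where i: "i \<in> I" "i \<noteq> 0" using nz dsub_0[OF ds] by blast
  obtain e where e: "e \<in> D" "e \<noteq> 0" "\<forall>y\<in>I. e * y \<in> D" using fr by blast
  obtain p q where pq: "p \<in> D" "q \<in> D" "q \<noteq> 0" "z = p / q" using Dquot by blast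
  have "q * (e * i) \<in> C"
  proof -
    have eq: "q * (e * i) * z = p * (e * i)" using pq by simp
    have "p * (e * i) \<in> I" using dsub_mult[OF ds] pq e i by blast
    then have "q * (e * i) * z \<in> I" by (subst eq)
    moreover have "q * (e * i) \<in> D" using pq e i Dmul by blast
    ultimately show ?thesis unfolding C_def by blast
  qed
  moreover have "q * (e * i) \<noteq> 0" using pq e i by simp
  ultimately have "C \<noteq> {0}" by blast
  then have nzC: "nz_frac_ideal D C" using nzfrac_sub_D dsC C_def by blast
  have "st C = D"
  proof (rule ccontr)
    assume "st C \<noteq> D"
    then obtain P where P: "MX P" "st C \<subseteq> P" using exists_MX[OF nzC] C_def by blast
    obtain s where "s \<in> D - P" "s * z \<in> I" using loc P by blast
    then have "s \<in> C" "s \<notin> P" unfolding C_def by auto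
    then show False using st_ext[OF nzC] P by blast
  qed
  have sub: "smul z C \<subseteq> I" unfolding C_def by (auto simp: smul_mem mult.commute)
  have "z \<in> smul z (st C)" using \<open>st C = D\<close> D1 smul_mem by fastforce
  also have "\<dots> = st (smul z C)" using st_smul[OF z0 nzC] by simp
  also have "\<dots> \<subseteq> st I" using st_mono[OF smul_nz[OF z0 nzC] I sub] .
  finally show ?thesis .
qed

lemma finv_alt: "b \<in> finv D I \<longleftrightarrow> (\<forall>y\<in>I. b * y \<in> D)" by (simp add: finv_def)

lemma inv_ft: assumes J: "nz_fg_ideal D J" shows "star_invertible D st (st J)"
proof -
  obtain S where S: "finite S" "J = gen D S" "J \<noteq> {0}" using J unfolding nz_fg_ideal_def by blast
  have nzJ: "nz_frac_ideal D J" using nzfg_nzfrac[OF J] .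
  have nzsJ: "nz_frac_ideal D (st J)" using st_nz[OF nzJ] .
  define C where "C = ideal_mult D (st J) (finv D (st J))"
  have CD: "C \<subseteq> D" unfolding C_def ideal_mult_def
  proof (intro gen_min[OF dsub_D] subsetI)
    fix x assume "x \<in> {a * b |a b. a \<in> st J \<and> b \<in> finv D (st J)}"
    then obtain a b where "x = a * b" "a \<in> st J" "b \<in> finv D (st J)" by blast
    then show "x \<in> D" unfolding finv_alt by (simp add: mult.commute)
  qed
  have dsC: "dsubmodule D C" unfolding C_def ideal_mult_def using gen_sub .
  have prodC: "a * b \<in> C" if ab: "a \<in> st J" "b \<in> finv D (st J)" for a b
  proof -
    have "a * b \<in> {a * b |a b. a \<in> st J \<and> b \<in> finv D (st J)}" using ab by blast
    then show ?thesis unfolding C_def ideal_mult_def by (rule subsetD[OF gen_incl])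
  qed
  obtain d where d: "d \<in> D" "d \<noteq> 0" "\<forall>y\<in>st J. d * y \<in> D"
    using nzsJ by (auto simp: nz_frac_ideal_def frac_ideal_def)
  have "st J \<noteq> {0}" using nzsJ by (simp add: nz_frac_ideal_def)
  then obtain s0 where s0: "s0 \<in> st J" "s0 \<noteq> 0" using st_sub[OF nzJ] dsub_0 by blast
  have "d \<in> finv D (st J)" unfolding finv_alt using d(3) by blast
  then have "s0 * d \<in> C" using prodC s0 by blast
  moreover have "s0 * d \<noteq> 0" using s0 d by simp
  ultimately have nzC: "nz_frac_ideal D C" using nzfrac_sub_D[OF dsC CD] by (metis singletonD)
  have "st C = D"
  proof (rule ccontr)
    assume "st C \<noteq> D"
    then obtain P where P: "MX P" "st C \<subseteq> P" using exists_MX[OF nzC CD] by blast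
    have "\<exists>s\<in>S. s \<noteq> 0" using S gen_zero by blast
    then obtain g where g: "g \<in> S" "g \<noteq> 0" "\<forall>s\<in>S. s / g \<in> V P" using min_elem[OF P(1) S(1)] by blast
    obtain u where u: "u \<in> D - P" "\<forall>y\<in>st (gen D S). u * y / g \<in> D"
      using Loc_core[OF P(1) S(1) _ g(2) g(3)] S by auto
    have "u / g \<in> finv D (st J)" unfolding finv_alt
    proof
      fix y assume "y \<in> st J"
      then have "u * y / g \<in> D" using u S by blast
      moreover have "u / g * y = u * y / g" by simp
      ultimately show "u / g * y \<in> D" by simp
    qed
    moreover have "g \<in> st J" using g S gen_incl st_ext[OF nzJ] by blast
    ultimately have "g * (u / g) \<in> C" using prodC by blast
    then have "u \<in> C" using g by simp
    then show False using u P st_ext[OF nzC] by blast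
  qed
  then show ?thesis unfolding star_invertible_def C_def by simp
qed



definition as :: "'a set \<Rightarrow> 'a \<Rightarrow> 'a \<Rightarrow> bool" where
  "as P x y \<longleftrightarrow> x / y \<in> V P \<and> y / x \<in> V P"

lemma as_trans: "MX P \<Longrightarrow> as P x y \<Longrightarrow> as P y z \<Longrightarrow> y \<noteq> 0 \<Longrightarrow> as P x z"
  unfolding as_def using V_trans by blast
lemma as_sym: "as P x y \<Longrightarrow> as P y x" unfolding as_def by blast
lemma as_pow: assumes P: "MX P" and a: "as P x y" shows "as P (x ^ n) (y ^ n)"
  using a V_pow[OF P] unfolding as_def by (metis power_divide)
lemma as_refl: "MX P \<Longrightarrow> x \<noteq> 0 \<Longrightarrow> as P x x" unfolding as_def using D_V D1 by simp

lemma pow_notin: "MX P \<Longrightarrow> u \<in> D \<Longrightarrow> u \<notin> P \<Longrightarrow> u ^ n \<notin> P"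
proof (induct n)
  case 0 then show ?case using MX_1 by simp
next
  case (Suc n) then show ?case using MX_prime Dpow by (metis power_Suc)
qed

lemma dsub_Vdiv: assumes P: "MX P" shows "dsubmodule D {y. y / c \<in> V P}"
  unfolding dsubmodule_def
proof (intro conjI ballI)
  show "0 \<in> {y. y / c \<in> V P}" using D_V[OF P D0] by simp
next
  fix x y assume "x \<in> {y. y / c \<in> V P}" "y \<in> {y. y / c \<in> V P}"
  then have "x / c + y / c \<in> V P" using V_add[OF P] by simp
  then show "x + y \<in> {y. y / c \<in> V P}" by (simp add: add_divide_distrib)
next
  fix d x assume "d \<in> D" "x \<in> {y. y / c \<in> V P}"
  then have dv: "d \<in> V P" and xv: "x / c \<in> V P" using D_V[OF P] by auto
  have e: "d * x / c = d * (x / c)" by simp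
  have "d * x / c \<in> V P" unfolding e by (rule V_mul[OF P dv xv])
  then show "d * x \<in> {y. y / c \<in> V P}" by simp
qed

lemma ipow_dsub: "dsubmodule D (ipow D A n)"
  by (cases n) (auto simp: dsub_D ideal_mult_def gen_sub)

lemma ipow_prod: "a \<in> A \<Longrightarrow> b \<in> ipow D A n \<Longrightarrow> a * b \<in> ipow D A (Suc n)"
proof -
  assume ab: "a \<in> A" "b \<in> ipow D A n"
  have "a * b \<in> {a * b |a b. a \<in> A \<and> b \<in> ipow D A n}" using ab by blast
  then show ?thesis unfolding ipow.simps ideal_mult_def by (rule subsetD[OF gen_incl])
qed

lemma ipow_D: "A \<subseteq> D \<Longrightarrow> ipow D A n \<subseteq> D"
proof (induct n)
  case 0 then show ?case by simp
next
  case (Suc n)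
  show ?case unfolding ipow.simps ideal_mult_def
  proof (intro gen_min[OF dsub_D] subsetI)
    fix x assume "x \<in> {a * b |a b. a \<in> A \<and> b \<in> ipow D A n}"
    then obtain a b where "x = a * b" "a \<in> A" "b \<in> ipow D A n" by blast
    then show "x \<in> D" using Suc Dmul by blast
  qed
qed

lemma ipow_pow: "a \<in> A \<Longrightarrow> a ^ n \<in> ipow D A n"
proof (induct n)
  case 0 then show ?case using D1 by simp
next
  case (Suc n) then show ?case using ipow_prod by simp
qed

lemma ipow_loc: assumes P: "MX P" and g: "g \<noteq> 0" and Ag: "\<forall>y\<in>A. y / g \<in> V P"
  shows "\<forall>y\<in>ipow D A n. y / g ^ n \<in> V P"
proof (induct n)
  case 0 then show ?case using D_V[OF P] by simp
next
  case (Suc n)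
  have "ipow D A (Suc n) \<subseteq> {y. y / g ^ Suc n \<in> V P}" unfolding ipow.simps ideal_mult_def
  proof (intro gen_min[OF dsub_Vdiv[OF P]] subsetI)
    fix x assume "x \<in> {a * b |a b. a \<in> A \<and> b \<in> ipow D A n}"
    then obtain a b where ab: "x = a * b" "a \<in> A" "b \<in> ipow D A n" by blast
    have e: "x / g ^ Suc n = (a / g) * (b / g ^ n)" unfolding ab(1) by (simp add: power_Suc)
    have "(a / g) * (b / g ^ n) \<in> V P" using V_mul[OF P] Ag Suc ab by blast
    then have "x / g ^ Suc n \<in> V P" by (subst e)
    then show "x \<in> {y. y / g ^ Suc n \<in> V P}" by simp
  qed
  then show ?case by blast
qed

lemma ipow_nz: assumes "A \<subseteq> D" "a \<in> A" "a \<noteq> 0" shows "nz_frac_ideal D (ipow D A n)"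
proof -
  have "a ^ n \<in> ipow D A n" "a ^ n \<noteq> 0" using assms ipow_pow by auto
  then show ?thesis using nzfrac_sub_D[OF ipow_dsub ipow_D[OF assms(1)]] by (metis singletonD)
qed

lemma ft_gen: "finite T \<Longrightarrow> gen D T \<noteq> {0} \<Longrightarrow> finite_type D st (st (gen D T))"
proof -
  assume a: "finite T" "gen D T \<noteq> {0}"
  then have nz: "nz_frac_ideal D (gen D T)" using gen_frac by (simp add: nz_frac_ideal_def)
  then have "star_ideal D st (st (gen D T))" using st_nz st_idem by (simp add: star_ideal_def)
  moreover have "nz_fg_ideal D (gen D T)" using a by (auto simp: nz_fg_ideal_def)
  ultimately show ?thesis unfolding finite_type_def by blast
qed

lemma gen_in: assumes "dsubmodule D Q" "st Q = Q" "nz_frac_ideal D Q" "T \<subseteq> Q" "finite T" "gen D T \<noteq> {0}"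
  shows "st (gen D T) \<subseteq> Q"
proof -
  have "gen D T \<subseteq> Q" using gen_min assms by blast
  moreover have "nz_frac_ideal D (gen D T)" using gen_frac assms by (simp add: nz_frac_ideal_def)
  ultimately show ?thesis using st_mono assms by metis
qed

lemma sh_unique:
  assumes sh: "super_homog D st A"
  shows "\<exists>P0. MX P0 \<and> A \<subseteq> P0 \<and> (\<forall>Q. MX Q \<and> A \<subseteq> Q \<longrightarrow> Q = P0)"
proof -
  have AD: "A \<subseteq> D" "A \<noteq> D" and ft: "finite_type D st A"
    and inv: "\<forall>A' B. finite_type D st A' \<and> A' \<subseteq> D \<and> A' \<noteq> D \<and> A \<subseteq> A' \<and>
            finite_type D st B \<and> B \<subseteq> D \<and> B \<noteq> D \<and> A \<subseteq> B \<longrightarrow> st (ideal_sum D A' B) \<noteq> D"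
    using sh unfolding super_homog_def by blast+
  obtain J where J: "nz_fg_ideal D J" "A = st J" and sA: "star_ideal D st A" using ft unfolding finite_type_def by blast
  obtain S where S: "finite S" "J = gen D S" "J \<noteq> {0}" using J unfolding nz_fg_ideal_def by blast
  have nzA: "nz_frac_ideal D A" "st A = A" using sA by (auto simp: star_ideal_def)
  have nzJ: "nz_frac_ideal D J" using nzfg_nzfrac J by blast
  have SA: "S \<subseteq> A" using S J gen_incl st_ext[OF nzJ] by blast
  obtain P0 where P0: "MX P0" "A \<subseteq> P0" using exists_MX[OF nzA(1) AD(1)] nzA AD by auto
  have "\<forall>Q. MX Q \<and> A \<subseteq> Q \<longrightarrow> Q = P0"
  proof (intro allI impI, rule ccontr)
    fix Q assume Q: "MX Q \<and> A \<subseteq> Q" and QP: "Q \<noteq> P0"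
    have "A \<noteq> {0}" using nzA by (simp add: nz_frac_ideal_def)
    then obtain a0 where a0: "a0 \<in> A" "a0 \<noteq> 0" using st_sub[OF nzJ] J dsub_0 by blast
    define F where "F = {R. MX R \<and> a0 \<in> R}"
    have finF: "finite F" unfolding F_def using loc_fin a0 AD by blast
    have "\<not> Q \<subseteq> P0" using MX_max[OF Q[THEN conjunct1] P0(1)] QP by blast
    then obtain x where x: "x \<in> Q" "x \<notin> P0" by blast
    have "\<forall>R\<in>F - {P0}. \<exists>z. z \<in> P0 \<and> z \<notin> R"
    proof
      fix R assume "R \<in> F - {P0}"
      then have "\<not> P0 \<subseteq> R" using MX_max[OF P0(1)] F_def by blast
      then show "\<exists>z. z \<in> P0 \<and> z \<notin> R" by blast
    qed
    then obtain z where z: "\<forall>R\<in>F - {P0}. z R \<in> P0 \<and> z R \<notin> R" by metis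
    have "\<exists>s\<in>S. s \<noteq> 0" using S gen_zero by blast
    then obtain s0 where s0: "s0 \<in> S" "s0 \<noteq> 0" by blast
    define T1 where "T1 = insert x S"
    define T2 where "T2 = S \<union> z ` (F - {P0})"
    have fin: "finite T1" "finite T2" using S finF unfolding T1_def T2_def by auto
    have nz: "gen D T1 \<noteq> {0}" "gen D T2 \<noteq> {0}" using s0 gen_incl unfolding T1_def T2_def by blast+
    have T1Q: "T1 \<subseteq> Q" using x SA Q unfolding T1_def by blast
    have T2P: "T2 \<subseteq> P0" using z SA P0 unfolding T2_def by blast
    let ?B1 = "st (gen D T1)" and ?B2 = "st (gen D T2)"
    have B1Q: "?B1 \<subseteq> Q" using gen_in[OF MX_dsub MX_st MX_nz T1Q fin(1) nz(1)] Q by blast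
    have B2P: "?B2 \<subseteq> P0" using gen_in[OF MX_dsub MX_st MX_nz T2P fin(2) nz(2)] P0 by blast
    have ft1: "finite_type D st ?B1" and ft2: "finite_type D st ?B2" using ft_gen fin nz by auto
    have nzg: "nz_frac_ideal D (gen D T1)" "nz_frac_ideal D (gen D T2)" using gen_frac fin nz by (auto simp: nz_frac_ideal_def)
    have "gen D S \<subseteq> gen D T1" "gen D S \<subseteq> gen D T2" unfolding T1_def T2_def by (rule gen_mono, blast)+
    then have "A \<subseteq> ?B1" "A \<subseteq> ?B2" unfolding J(2) using st_mono[OF _ nzg(1)] st_mono[OF _ nzg(2)] nzJ S(2) by auto
    moreover have "?B1 \<subseteq> D" "?B1 \<noteq> D" "?B2 \<subseteq> D" "?B2 \<noteq> D"
      using B1Q B2P MX_sub[OF P0(1)] MX_ne[OF P0(1)] MX_sub[of Q] MX_ne[of Q] Q by blast+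
    ultimately have ne: "st (ideal_sum D ?B1 ?B2) \<noteq> D" using inv ft1 ft2 by blast
    have dsum: "dsubmodule D (ideal_sum D ?B1 ?B2)" unfolding ideal_sum_def using gen_sub .
    have B12: "?B1 \<union> ?B2 \<subseteq> ideal_sum D ?B1 ?B2" unfolding ideal_sum_def using gen_incl .
    have sumD: "ideal_sum D ?B1 ?B2 \<subseteq> D" unfolding ideal_sum_def
      using \<open>?B1 \<subseteq> D\<close> \<open>?B2 \<subseteq> D\<close> by (intro gen_min[OF dsub_D]) blast
    have "a0 \<in> ideal_sum D ?B1 ?B2" using a0 \<open>A \<subseteq> ?B1\<close> B12 by blast
    then have nzs: "nz_frac_ideal D (ideal_sum D ?B1 ?B2)" using nzfrac_sub_D[OF dsum sumD] a0 by (metis singletonD)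
    obtain R where R: "MX R" "st (ideal_sum D ?B1 ?B2) \<subseteq> R" using exists_MX[OF nzs sumD ne] by blast
    have BR: "?B1 \<subseteq> R" "?B2 \<subseteq> R" using R B12 st_ext[OF nzs] by blast+
    then have "a0 \<in> R" using a0 \<open>A \<subseteq> ?B1\<close> by blast
    then have RF: "R \<in> F" using R F_def by blast
    show False
    proof (cases "R = P0")
      case True
      then show False using x BR gen_incl[of T1] st_ext[OF nzg(1)] T1_def by blast
    next
      case False
      then have "z R \<in> T2" "z R \<notin> R" using RF z T2_def by auto
      then show False using BR gen_incl[of T2] st_ext[OF nzg(2)] by blast
    qed
  qed
  then show ?thesis using P0 by blast
qed



lemma gcd_half:
  assumes Q: "MX Q" and ab: "a \<in> D" "b \<in> D" "c \<noteq> 0"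
    and eq: "smul a D \<inter> smul b D = smul c D" and ba: "b / a \<in> V Q"
  shows "b / c \<in> V Q \<and> c / b \<in> V Q"
proof
  have "c \<in> smul c D" using D1 smul_mem by fastforce
  then have "c \<in> smul b D" using eq by blast
  then obtain m where m: "m \<in> D" "c = b * m" by (auto simp: smul_mem)
  have "b \<noteq> 0" using m ab by auto
  then have "c / b = m" using m by simp
  then show "c / b \<in> V Q" using D_V[OF Q] m by simp
next
  obtain s where s: "s \<in> D" "s \<notin> Q" "s * (b / a) \<in> D" using ba unfolding V_mem by blast
  have a0: "a \<noteq> 0"
  proof
    assume "a = 0"
    then have "smul a D = {0}" using D0 by (auto simp: smul_mem)
    moreover have "c \<in> smul c D" using D1 smul_mem by fastforce
    ultimately show False using eq ab by blast
  qed
  have "s * b = a * (s * (b / a))" using a0 by simp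
  then have "s * b \<in> smul a D" using s smul_mem by blast
  moreover have "s * b \<in> smul b D" using s smul_mem by (metis mult.commute)
  ultimately have "s * b \<in> smul c D" using eq by blast
  then obtain t where t: "t \<in> D" "s * b = c * t" by (auto simp: smul_mem)
  have "s * (b / c) = t" using t ab by (simp add: field_simps)
  then show "b / c \<in> V Q" using s t unfolding V_mem by blast
qed

lemma gcd_step:
  assumes ag: "AGCD D" and z: "z \<in> D" "z \<noteq> 0" and w: "w \<in> D" "w \<noteq> 0"
  shows "\<exists>n\<ge>1. \<exists>e\<in>D. e \<noteq> 0 \<and> (\<forall>Q. MX Q \<longrightarrow> (w / z \<in> V Q \<longrightarrow> as Q e (z ^ n)) \<and> (z / w \<in> V Q \<longrightarrow> as Q e (w ^ n)))"
proof -
  obtain n c where n: "n \<ge> 1" "c \<in> D" "smul (z ^ n) D \<inter> smul (w ^ n) D = smul c D"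
    using ag z w unfolding AGCD_def by blast
  have "z ^ n * w ^ n \<in> smul (z ^ n) D" using Dpow[OF w(1)] smul_mem by blast
  moreover have "z ^ n * w ^ n \<in> smul (w ^ n) D" using Dpow[OF z(1)] smul_mem by (metis mult.commute)
  ultimately have "z ^ n * w ^ n \<in> smul c D" using n by blast
  then obtain k where k: "k \<in> D" "z ^ n * w ^ n = c * k" by (auto simp: smul_mem)
  have nz: "z ^ n * w ^ n \<noteq> 0" using z w by simp
  then have c0: "c \<noteq> 0" and k0: "k \<noteq> 0" using k by auto
  have ke: "k = z ^ n * w ^ n / c" unfolding k(2) using c0 by simp
  have n2: "smul (w ^ n) D \<inter> smul (z ^ n) D = smul c D" using n by blast
  have "\<forall>Q. MX Q \<longrightarrow> (w / z \<in> V Q \<longrightarrow> as Q k (z ^ n)) \<and> (z / w \<in> V Q \<longrightarrow> as Q k (w ^ n))"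
  proof (intro allI impI conjI)
    fix Q assume Q: "MX Q" and wz: "w / z \<in> V Q"
    have "w ^ n / z ^ n \<in> V Q" using V_pow[OF Q wz] by (simp add: power_divide)
    then have h: "w ^ n / c \<in> V Q \<and> c / w ^ n \<in> V Q" using gcd_half[OF Q Dpow[OF z(1)] Dpow[OF w(1)] c0 n(3)] by blast
    have "k / z ^ n = w ^ n / c" "z ^ n / k = c / w ^ n" using k(2) k0 z w c0 by (simp_all add: frac_eq_eq algebra_simps)
    then show "as Q k (z ^ n)" using h unfolding as_def by simp
  next
    fix Q assume Q: "MX Q" and wz: "z / w \<in> V Q"
    have "z ^ n / w ^ n \<in> V Q" using V_pow[OF Q wz] by (simp add: power_divide)
    then have h: "z ^ n / c \<in> V Q \<and> c / z ^ n \<in> V Q" using gcd_half[OF Q Dpow[OF w(1)] Dpow[OF z(1)] c0 n2] by blast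
    have "k / w ^ n = z ^ n / c" "w ^ n / k = c / z ^ n" using k(2) k0 z w c0 by (simp_all add: frac_eq_eq algebra_simps)
    then show "as Q k (w ^ n)" using h unfolding as_def by simp
  qed
  then show ?thesis using n k k0 by blast
qed

lemma iter:
  assumes ag: "AGCD D" and P0: "MX P0" and g: "g \<in> D" "g \<noteq> 0" and AD: "A \<subseteq> D"
    and Ag: "\<forall>y\<in>A. y / g \<in> V P0" and fin: "finite Qs"
  shows "(\<forall>Q\<in>Qs. MX Q \<and> Q \<noteq> P0 \<and> (\<exists>u\<in>A. u \<notin> Q)) \<Longrightarrow>
    \<exists>N\<ge>1. \<exists>e\<in>D. e \<noteq> 0 \<and> as P0 e (g ^ N) \<and> (\<forall>Q. MX Q \<and> Q \<noteq> P0 \<and> (g \<notin> Q \<or> Q \<in> Qs) \<longrightarrow> 1 / e \<in> V Q)"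
  using fin
proof (induct Qs)
  case empty
  have "as P0 g (g ^ 1)" using as_refl[OF P0 g(2)] by simp
  moreover have "\<forall>Q. MX Q \<and> Q \<noteq> P0 \<and> (g \<notin> Q \<or> Q \<in> {}) \<longrightarrow> 1 / g \<in> V Q" using V_inv g by blast
  ultimately show ?case using g by (intro exI[of _ 1]) auto
next
  case (insert Q1 Qs)
  then have Q1: "MX Q1" "Q1 \<noteq> P0" and "\<exists>u\<in>A. u \<notin> Q1" by auto
  then obtain u where u: "u \<in> A" "u \<notin> Q1" by blast
  have uD: "u \<in> D" using u AD by blast
  have u0: "u \<noteq> 0" using u MX_0[OF Q1(1)] by auto
  obtain N e where Ne: "N \<ge> 1" "e \<in> D" "e \<noteq> 0" "as P0 e (g ^ N)"
    and eQ: "\<forall>Q. MX Q \<and> Q \<noteq> P0 \<and> (g \<notin> Q \<or> Q \<in> Qs) \<longrightarrow> 1 / e \<in> V Q" using insert by auto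
  have uN: "u ^ N \<in> D" "u ^ N \<noteq> 0" using uD u0 Dpow by auto
  obtain m e' where me: "m \<ge> 1" "e' \<in> D" "e' \<noteq> 0"
    and ee: "\<forall>Q. MX Q \<longrightarrow> (u ^ N / e \<in> V Q \<longrightarrow> as Q e' (e ^ m)) \<and> (e / u ^ N \<in> V Q \<longrightarrow> as Q e' ((u ^ N) ^ m))"
    using gcd_step[OF ag Ne(2,3) uN] by blast
  have gN0: "g ^ N \<noteq> 0" using g by simp
  have "u ^ N / g ^ N \<in> V P0" using V_pow[OF P0] Ag u by (metis power_divide)
  moreover have "g ^ N / e \<in> V P0" using Ne(4) unfolding as_def by blast
  ultimately have "u ^ N / e \<in> V P0" using V_trans[OF P0 _ _ gN0] by blast
  then have "as P0 e' (e ^ m)" using ee P0 by blast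
  moreover have "as P0 (e ^ m) ((g ^ N) ^ m)" using as_pow[OF P0 Ne(4)] .
  ultimately have "as P0 e' ((g ^ N) ^ m)" using as_trans[OF P0] Ne(3) by simp
  then have A1: "as P0 e' (g ^ (N * m))" by (simp add: power_mult)
  have A2: "1 / e' \<in> V Q" if Q: "MX Q" "Q \<noteq> P0" "g \<notin> Q \<or> Q \<in> insert Q1 Qs" for Q
  proof (cases "g \<notin> Q \<or> Q \<in> Qs")
    case True
    then have ie: "1 / e \<in> V Q" using eQ Q by blast
    have "u ^ N / e = u ^ N * (1 / e)" by simp
    then have "u ^ N / e \<in> V Q" using V_mul[OF Q(1) D_V[OF Q(1) uN(1)] ie] by metis
    then have "as Q e' (e ^ m)" using ee Q by blast
    then have a: "e ^ m / e' \<in> V Q" unfolding as_def by blast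
    have eq: "1 / e' = (e ^ m / e') * (1 / e) ^ m" using Ne(3) me(3) by (simp add: field_simps)
    show ?thesis by (subst eq) (rule V_mul[OF Q(1) a V_pow[OF Q(1) ie]])
  next
    case False
    then have QQ: "Q = Q1" using Q by blast
    have iu: "1 / u \<in> V Q" using V_inv[OF Q(1) uD] u QQ by blast
    have "e / u ^ N = e * (1 / u) ^ N" by (simp add: power_one_over)
    then have "e / u ^ N \<in> V Q" using V_mul[OF Q(1) D_V[OF Q(1) Ne(2)] V_pow[OF Q(1) iu]] by metis
    then have "as Q e' ((u ^ N) ^ m)" using ee Q by blast
    then have a: "(u ^ N) ^ m / e' \<in> V Q" unfolding as_def by blast
    have eq: "1 / e' = ((u ^ N) ^ m / e') * ((1 / u) ^ N) ^ m" using u0 me(3) by (simp add: field_simps power_one_over)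
    show ?thesis by (subst eq) (rule V_mul[OF Q(1) a V_pow[OF Q(1) V_pow[OF Q(1) iu]]])
  qed
  have "N * m \<ge> 1" using Ne me by simp
  then show ?case using A1 A2 me by blast
qed

lemma fwd:
  assumes ag: "AGCD D" and sh: "super_homog D st A"
  shows "\<exists>n>0. \<exists>x. st (ipow D A n) = smul x D"
proof -
  obtain P0 where P0: "MX P0" "A \<subseteq> P0" and uq: "\<forall>Q. MX Q \<and> A \<subseteq> Q \<longrightarrow> Q = P0" using sh_unique[OF sh] by blast
  have AD: "A \<subseteq> D" and ft: "finite_type D st A" using sh unfolding super_homog_def by blast+
  obtain J where J: "nz_fg_ideal D J" "A = st J" using ft unfolding finite_type_def by blast
  obtain S where S: "finite S" "J = gen D S" "J \<noteq> {0}" using J unfolding nz_fg_ideal_def by blast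
  have nzJ: "nz_frac_ideal D J" using nzfg_nzfrac J by blast
  have SA: "S \<subseteq> A" using S J gen_incl st_ext[OF nzJ] by blast
  have "\<exists>s\<in>S. s \<noteq> 0" using S gen_zero by blast
  then obtain g where g: "g \<in> S" "g \<noteq> 0" "\<forall>s\<in>S. s / g \<in> V P0" using min_elem[OF P0(1) S(1)] by blast
  have gA: "g \<in> A" and gD: "g \<in> D" using g SA AD by auto
  have "J \<subseteq> {y. y / g \<in> V P0}" unfolding S(2) using g by (intro gen_min[OF dsub_Vdiv[OF P0(1)]]) auto
  then have Ag: "\<forall>y\<in>A. y / g \<in> V P0" using LocI[OF P0(1) nzJ g(2)] J by blast
  define Qs where "Qs = {Q. MX Q \<and> g \<in> Q} - {P0}"
  have finQ: "finite Qs" unfolding Qs_def using loc_fin[OF gD g(2)] by simp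
  have notin: "\<exists>u\<in>A. u \<notin> Q" if "MX Q" "Q \<noteq> P0" for Q using uq that by blast
  have "\<forall>Q\<in>Qs. MX Q \<and> Q \<noteq> P0 \<and> (\<exists>u\<in>A. u \<notin> Q)" using notin Qs_def by blast
  then obtain N e where Ne: "N \<ge> 1" "e \<in> D" "e \<noteq> 0" "as P0 e (g ^ N)"
    and eQ: "\<forall>Q. MX Q \<and> Q \<noteq> P0 \<and> (g \<notin> Q \<or> Q \<in> Qs) \<longrightarrow> 1 / e \<in> V Q"
    using iter[OF ag P0(1) gD g(2) AD Ag finQ] by blast
  have eQ': "\<forall>Q. MX Q \<and> Q \<noteq> P0 \<longrightarrow> 1 / e \<in> V Q" using eQ Qs_def by blast
  let ?AN = "ipow D A N"
  have nzAN: "nz_frac_ideal D ?AN" using ipow_nz[OF AD gA g(2)] .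
  have AND: "?AN \<subseteq> D" using ipow_D[OF AD] .
  have stAND: "st ?AN \<subseteq> D" using st_subD[OF nzAN AND] .
  have "st ?AN = smul e D"
  proof
    show "st ?AN \<subseteq> smul e D"
    proof
      fix y assume y: "y \<in> st ?AN"
      have "\<forall>Q. MX Q \<longrightarrow> y / e \<in> V Q"
      proof (intro allI impI)
        fix Q assume Q: "MX Q"
        show "y / e \<in> V Q"
        proof (cases "Q = P0")
          case True
          have "\<forall>y\<in>?AN. y / g ^ N \<in> V P0" using ipow_loc[OF P0(1) g(2) Ag] .
          then have "y / g ^ N \<in> V P0" using LocI[OF P0(1) nzAN] g(2) y by simp
          moreover have "g ^ N / e \<in> V P0" using Ne(4) unfolding as_def by blast
          ultimately show ?thesis using V_trans[OF P0(1)] g(2) True by simp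
        next
          case False
          have "y \<in> V Q" using D_V[OF Q] y stAND by blast
          moreover have "1 / e \<in> V Q" using eQ' Q False by blast
          ultimately have "y * (1 / e) \<in> V Q" using V_mul[OF Q] by blast
          then show ?thesis by simp
        qed
      qed
      then have "y / e \<in> D" using D_eq by blast
      moreover have "y = e * (y / e)" using Ne(3) by simp
      ultimately show "y \<in> smul e D" using smul_mem by blast
    qed
  next
    have "e \<in> st ?AN"
    proof (rule G[OF nzAN], intro allI impI)
      fix Q assume Q: "MX Q"
      show "\<exists>s\<in>D - Q. s * e \<in> ?AN"
      proof (cases "Q = P0")
        case True
        have "e / g ^ N \<in> V P0" using Ne(4) unfolding as_def by blast
        then obtain s where s: "s \<in> D" "s \<notin> P0" "s * (e / g ^ N) \<in> D" unfolding V_mem by blast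
        have "s * e = (s * (e / g ^ N)) * g ^ N" using g(2) by simp
        also have "\<dots> \<in> ?AN" using dsub_mult[OF ipow_dsub s(3) ipow_pow[OF gA]] .
        finally show ?thesis using s True by blast
      next
        case False
        then obtain u where u: "u \<in> A" "u \<notin> Q" using notin Q by blast
        have "u ^ N \<notin> Q" using pow_notin[OF Q] u AD by blast
        moreover have "u ^ N * e \<in> ?AN" using dsub_mult[OF ipow_dsub Ne(2) ipow_pow[OF u(1)]] by (simp add: mult.commute)
        moreover have "u ^ N \<in> D" using u AD Dpow by blast
        ultimately show ?thesis by blast
      qed
    qed
    then show "smul e D \<subseteq> st ?AN" using dsub_mult[OF st_sub[OF nzAN]] by (auto simp: smul_mem mult.commute)
  qed
  then show ?thesis using Ne(1) by (intro exI[of _ N]) auto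
qed



lemma as_mult: "as P x y \<Longrightarrow> as P x' y' \<Longrightarrow> MX P \<Longrightarrow> as P (x * x') (y * y')"
  unfolding as_def using V_mul by (metis times_divide_times_eq)

lemma Kout:
  assumes P: "MX P" and P': "MX P'" and ne: "P \<noteq> P'" and g: "g \<in> D" "g \<noteq> 0" "g \<in> P"
  shows "\<exists>y\<in>D. y / g \<in> V P \<and> y \<notin> P'"
proof (rule ccontr)
  assume "\<not> ?thesis"
  then have K: "\<forall>y\<in>D. y / g \<in> V P \<longrightarrow> y \<in> P'" by blast
  define R where "R = {x \<in> D. \<exists>n\<ge>1. x ^ n / g \<in> V P}"
  have R0: "0 \<in> R" unfolding R_def using D0 D_V[OF P D0] by (intro CollectI conjI exI[of _ 1]) auto
  have Radd: "x + y \<in> R" if xy: "x \<in> R" "y \<in> R" for x y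
  proof -
    obtain n where n: "x \<in> D" "n \<ge> 1" "x ^ n / g \<in> V P" using xy R_def by blast
    obtain m where m: "y \<in> D" "m \<ge> 1" "y ^ m / g \<in> V P" using xy R_def by blast
    have xyD: "x + y \<in> D" using n m Dadd by blast
    have key: "(x + y) ^ k / g \<in> V P" if "x' \<in> D" "y' \<in> D" "x' ^ k / g \<in> V P" "y' / x' \<in> V P" "x' \<noteq> 0"
      "x' + y' = x + y" for x' y' k
    proof -
      have e1: "x + y = x' * (1 + y' / x')" using that by (simp add: field_simps)
      have "(x + y) ^ k / g = (x' ^ k / g) * (1 + y' / x') ^ k" unfolding e1
        by (simp add: power_mult_distrib)
      moreover have "1 + y' / x' \<in> V P" using V_add[OF P D_V[OF P D1]] that by blast
      ultimately show ?thesis using V_mul[OF P that(3) V_pow[OF P \<open>1 + y' / x' \<in> V P\<close>]] by (simp only:)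
    qed
    show ?thesis
    proof (cases "x = 0 \<or> y = 0")
      case True
      then have "x + y = x \<or> x + y = y" by auto
      then show ?thesis using xy by (metis)
    next
      case False
      then show ?thesis
      proof (cases "y / x \<in> V P")
        case True
        have "(x + y) ^ n / g \<in> V P" using key[OF n(1) m(1) n(3) True] False by blast
        then show ?thesis unfolding R_def using xyD n(2) by blast
      next
        case F2: False
        then have "x / y \<in> V P" using V_dich[OF P] by blast
        then have "(x + y) ^ m / g \<in> V P" using key[OF m(1) n(1) m(3)] False by (simp add: add.commute)
        then show ?thesis unfolding R_def using xyD m(2) by blast
      qed
    qed
  qed
  have Rmul: "d * x \<in> R" if dx: "d \<in> D" "x \<in> R" for d x
  proof -
    obtain n where n: "x \<in> D" "n \<ge> 1" "x ^ n / g \<in> V P" using dx R_def by blast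
    have "(d * x) ^ n / g = d ^ n * (x ^ n / g)" by (simp add: power_mult_distrib)
    moreover have "d ^ n * (x ^ n / g) \<in> V P" using V_mul[OF P D_V[OF P Dpow[OF dx(1)]] n(3)] .
    ultimately have "(d * x) ^ n / g \<in> V P" by (simp only:)
    moreover have "d * x \<in> D" using n dx Dmul by blast
    ultimately show ?thesis unfolding R_def using n(2) by blast
  qed
  have dsR: "dsubmodule D R" unfolding dsubmodule_def using R0 Radd Rmul by blast
  have RD: "R \<subseteq> D" unfolding R_def by blast
  have gR: "g \<in> R" unfolding R_def using g D_V[OF P D1] by (intro CollectI conjI exI[of _ 1]) auto
  have RP: "x \<in> P" if xR: "x \<in> R" for x
  proof -
    obtain n where n: "x \<in> D" "n \<ge> 1" "x ^ n / g \<in> V P" using xR R_def by blast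
    have "x ^ n \<in> P" using V_divD[OF P Dpow[OF n(1)] n(3) g(3) g(1) g(2)] .
    then show ?thesis using pow_notin[OF P n(1)] by blast
  qed
  have RP': "x \<in> P'" if xR: "x \<in> R" for x
  proof -
    obtain n where n: "x \<in> D" "n \<ge> 1" "x ^ n / g \<in> V P" using xR R_def by blast
    have "x ^ n \<in> P'" using K Dpow[OF n(1)] n(3) by blast
    then show ?thesis using pow_notin[OF P' n(1)] by blast
  qed
  have "1 \<notin> R" using RP MX_1[OF P] by blast
  then have RneD: "R \<noteq> D" using D1 by blast
  have prime: "\<forall>x\<in>D. \<forall>y\<in>D. x * y \<in> R \<longrightarrow> x \<in> R \<or> y \<in> R"
  proof (intro ballI impI)
    fix x y assume xy: "x \<in> D" "y \<in> D" "x * y \<in> R"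
    show "x \<in> R \<or> y \<in> R"
    proof (cases "x = 0 \<or> y = 0")
      case True then show ?thesis using R0 by auto
    next
      case False
      obtain n where n: "n \<ge> 1" "(x * y) ^ n / g \<in> V P" using xy R_def by blast
      have x0: "x ^ n \<noteq> 0" "y ^ n \<noteq> 0" using False by auto
      have "(2 * n) \<ge> 1" using n by simp
      show ?thesis
      proof (cases "x ^ n / y ^ n \<in> V P")
        case True
        have "((x * y) ^ n / g) * (x ^ n / y ^ n) = x ^ n * x ^ n / g" using x0
          using g(2) by (simp add: power_mult_distrib)
        also have "\<dots> = x ^ (2 * n) / g" by (simp add: mult_2 power_add)
        finally have "x ^ (2 * n) / g \<in> V P" using V_mul[OF P n(2) True] by (simp only:)
        then show ?thesis unfolding R_def using xy \<open>2 * n \<ge> 1\<close> by blast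
      next
        case False
        then have T: "y ^ n / x ^ n \<in> V P" using V_dich[OF P] by blast
        have "((x * y) ^ n / g) * (y ^ n / x ^ n) = y ^ n * y ^ n / g" using x0
          using g(2) by (simp add: power_mult_distrib)
        also have "\<dots> = y ^ (2 * n) / g" by (simp add: mult_2 power_add)
        finally have "y ^ (2 * n) / g \<in> V P" using V_mul[OF P n(2) T] by (simp only:)
        then show ?thesis unfolding R_def using xy \<open>2 * n \<ge> 1\<close> by blast
      qed
    qed
  qed
  have "prime_ideal D R" unfolding prime_ideal_def using RD dsR RneD prime by blast
  moreover have "R \<noteq> {0}" using gR g by blast
  moreover have "R \<subseteq> P" "R \<subseteq> P'" using RP RP' by blast+
  ultimately show False using indep[OF P P' ne] by blast
qed



lemma construct:
  assumes a: "a \<in> D" "a \<noteq> 0" and b: "b \<in> D" "b \<noteq> 0" and P: "MX P" "a \<in> P" "b \<in> P"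
    and g: "g = a \<or> g = b" "a / g \<in> V P" "b / g \<in> V P"
  shows "\<exists>A. super_homog D st A \<and> g \<in> A \<and> A \<subseteq> D \<and> (\<forall>t\<in>A. t / g \<in> V P) \<and> (\<forall>Q. MX Q \<and> Q \<noteq> P \<longrightarrow> (\<exists>w\<in>A. w \<notin> Q))"
proof -
  have gD: "g \<in> D" "g \<noteq> 0" "g \<in> P" using g a b P by auto
  define F where "F = {Q. MX Q \<and> a \<in> Q \<and> b \<in> Q}"
  have finF: "finite F" unfolding F_def using loc_fin[OF a] by (rule finite_subset[rotated]) blast
  have "\<forall>Q\<in>F - {P}. \<exists>y. y \<in> D \<and> y / g \<in> V P \<and> y \<notin> Q"
  proof
    fix Q assume "Q \<in> F - {P}"
    then have "MX Q" "P \<noteq> Q" unfolding F_def by auto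
    then show "\<exists>y. y \<in> D \<and> y / g \<in> V P \<and> y \<notin> Q" using Kout[OF P(1) _ _ gD] by blast
  qed
  then obtain y where y: "\<forall>Q\<in>F - {P}. y Q \<in> D \<and> y Q / g \<in> V P \<and> y Q \<notin> Q" by metis
  define T where "T = {a, b} \<union> y ` (F - {P})"
  have finT: "finite T" unfolding T_def using finF by simp
  have TD: "T \<subseteq> D" unfolding T_def using a b y by auto
  have Tg: "\<forall>t\<in>T. t / g \<in> V P" unfolding T_def using g y by auto
  have TP: "T \<subseteq> P"
  proof
    fix t assume t: "t \<in> T"
    show "t \<in> P" using V_divD[OF P(1) _ _ gD(3) gD(1) gD(2)] t TD Tg by blast
  qed
  have aT: "a \<in> gen D T" by (rule subsetD[OF gen_incl]) (simp add: T_def)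
  have nz0: "gen D T \<noteq> {0}" using aT a by (metis singletonD)
  have nzg: "nz_frac_ideal D (gen D T)" using gen_frac[OF finT] nz0 by (simp add: nz_frac_ideal_def)
  define A where "A = st (gen D T)"
  have TA: "T \<subseteq> A" unfolding A_def using gen_incl[of T] st_ext[OF nzg] by (rule subset_trans)
  have AP: "A \<subseteq> P" unfolding A_def using gen_in[OF MX_dsub[OF P(1)] MX_st[OF P(1)] MX_nz[OF P(1)] TP finT nz0] .
  have AD: "A \<subseteq> D" using AP MX_sub[OF P(1)] by blast
  have AneD: "A \<noteq> D" using AP MX_sub[OF P(1)] MX_ne[OF P(1)] by blast
  have uniq: "Q = P" if Q: "MX Q" "A \<subseteq> Q" for Q
  proof (rule ccontr)
    assume ne: "Q \<noteq> P"
    have "Q \<in> F" unfolding F_def using Q TA T_def by blast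
    then have "y Q \<in> T" "y Q \<notin> Q" using ne y T_def by auto
    then show False using TA Q by blast
  qed
  have notin: "\<forall>Q. MX Q \<and> Q \<noteq> P \<longrightarrow> (\<exists>w\<in>A. w \<notin> Q)" using uniq by blast
  have "gen D T \<subseteq> {t. t / g \<in> V P}" using Tg by (intro gen_min[OF dsub_Vdiv[OF P(1)]]) auto
  then have Ag: "\<forall>t\<in>A. t / g \<in> V P" unfolding A_def using LocI[OF P(1) nzg gD(2)] by blast
  have gA: "g \<in> A" using TA g T_def by blast
  have ftA: "finite_type D st A" unfolding A_def using ft_gen[OF finT nz0] .
  have inv: "\<forall>J. finite_type D st J \<and> A \<subseteq> J \<longrightarrow> star_invertible D st J"
    using inv_ft unfolding finite_type_def by blast
  have sums: "\<forall>A' B. finite_type D st A' \<and> A' \<subseteq> D \<and> A' \<noteq> D \<and> A \<subseteq> A' \<and>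
            finite_type D st B \<and> B \<subseteq> D \<and> B \<noteq> D \<and> A \<subseteq> B \<longrightarrow> st (ideal_sum D A' B) \<noteq> D"
  proof (intro allI impI)
    fix A' B assume H: "finite_type D st A' \<and> A' \<subseteq> D \<and> A' \<noteq> D \<and> A \<subseteq> A' \<and>
            finite_type D st B \<and> B \<subseteq> D \<and> B \<noteq> D \<and> A \<subseteq> B"
    have inP: "X \<subseteq> P" if X: "finite_type D st X" "X \<subseteq> D" "X \<noteq> D" "A \<subseteq> X" for X
    proof -
      have nzX: "nz_frac_ideal D X" "st X = X" using X(1) unfolding finite_type_def star_ideal_def by auto
      obtain R where R: "MX R" "st X \<subseteq> R" using exists_MX[OF nzX(1) X(2)] nzX X by auto
      then have "R = P" using uniq X nzX by blast
      then show ?thesis using R nzX by simp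
    qed
    have A'P: "A' \<subseteq> P" and BP: "B \<subseteq> P" using inP H by blast+
    have sP: "ideal_sum D A' B \<subseteq> P" unfolding ideal_sum_def using A'P BP by (intro gen_min[OF MX_dsub[OF P(1)]]) blast
    have aTT: "a \<in> T" by (simp add: T_def)
    have "A' \<subseteq> ideal_sum D A' B" unfolding ideal_sum_def using gen_incl by blast
    then have "a \<in> ideal_sum D A' B" using H TA aTT by blast
    then have nzs: "nz_frac_ideal D (ideal_sum D A' B)"
      using nzfrac_sub_D[OF _ _] gen_sub sP MX_sub[OF P(1)] a unfolding ideal_sum_def by (metis singletonD subset_trans)
    have "st (ideal_sum D A' B) \<subseteq> P" using st_mono[OF nzs MX_nz[OF P(1)] sP] MX_st[OF P(1)] by simp
    then show "st (ideal_sum D A' B) \<noteq> D" using MX_sub[OF P(1)] MX_ne[OF P(1)] by blast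
  qed
  have "super_homog D st A" unfolding super_homog_def using AD AneD ftA inv sums by blast
  then show ?thesis using gA AD Ag notin by blast
qed

lemma loc_facts:
  assumes AD: "A \<subseteq> D" and gA: "g \<in> A" "g \<noteq> 0" and P: "MX P" and Ag: "\<forall>t\<in>A. t / g \<in> V P"
    and notin: "\<forall>Q. MX Q \<and> Q \<noteq> P \<longrightarrow> (\<exists>w\<in>A. w \<notin> Q)"
    and eq: "st (ipow D A n) = smul x D"
  shows "x \<in> D \<and> x \<noteq> 0 \<and> as P x (g ^ n) \<and> (\<forall>Q. MX Q \<and> Q \<noteq> P \<longrightarrow> as Q x 1)"
proof -
  have nzA: "nz_frac_ideal D (ipow D A n)" using ipow_nz[OF AD gA] .
  have sub: "ipow D A n \<subseteq> smul x D" using st_ext[OF nzA] eq by simp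
  have "g ^ n \<in> smul x D" using sub ipow_pow[OF gA(1)] by blast
  then obtain d where d: "d \<in> D" "g ^ n = x * d" by (auto simp: smul_mem)
  have x0: "x \<noteq> 0" using d gA by auto
  have xst: "x \<in> st (ipow D A n)" using eq D1 smul_mem by fastforce
  have xD: "x \<in> D" using xst st_subD[OF nzA ipow_D[OF AD]] by blast
  have "x / g ^ n \<in> V P" using LocI[OF P nzA _ ipow_loc[OF P gA(2) Ag]] gA xst by simp
  moreover have "g ^ n / x = d" using d x0 by simp
  ultimately have asP: "as P x (g ^ n)" unfolding as_def using D_V[OF P d(1)] by simp
  have "as Q x 1" if Q: "MX Q" "Q \<noteq> P" for Q
  proof -
    obtain w where w: "w \<in> A" "w \<notin> Q" using notin Q by blast
    have wD: "w \<in> D" using w AD by blast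
    have "w ^ n \<in> smul x D" using sub ipow_pow[OF w(1)] by blast
    then obtain d' where d': "d' \<in> D" "w ^ n = x * d'" by (auto simp: smul_mem)
    have w0: "w \<noteq> 0" using w MX_0[OF Q(1)] by auto
    have "w ^ n \<noteq> 0" using w0 by simp
    then have "d' \<noteq> 0" using d' by auto
    then have e: "1 / x = d' * (1 / w) ^ n" using d' w0 x0 by (simp add: power_one_over field_simps)
    have "1 / x \<in> V Q" unfolding e using V_mul[OF Q(1) D_V[OF Q(1) d'(1)] V_pow[OF Q(1) V_inv[OF Q(1) wD w(2)]]] .
    then show ?thesis unfolding as_def using D_V[OF Q(1) xD] by simp
  qed
  then show ?thesis using xD x0 asP by blast
qed



lemma bwd:
  assumes H: "\<forall>A. super_homog D st A \<longrightarrow> (\<exists>n>0. \<exists>x. st (ipow D A n) = smul x D)"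
  shows "AGCD D"
  unfolding AGCD_def
proof (intro ballI impI)
  fix a b assume ab0: "a \<in> D" "b \<in> D" "a \<noteq> 0 \<and> b \<noteq> 0"
  have a: "a \<in> D" "a \<noteq> 0" and b: "b \<in> D" "b \<noteq> 0" using ab0 by auto
  define gm where "gm Q = (if a / b \<in> V Q then b else a)" for Q
  have gmab: "gm Q = a \<or> gm Q = b" for Q unfolding gm_def by auto
  have gmD: "gm Q \<in> D" "gm Q \<noteq> 0" for Q using gmab a b by (metis)+
  have gmV: "a / gm Q \<in> V Q \<and> b / gm Q \<in> V Q" if Q: "MX Q" for Q
  proof (cases "a / b \<in> V Q")
    case True then show ?thesis unfolding gm_def using b D_V[OF Q D1] by simp
  next
    case False then have "b / a \<in> V Q" using V_dich[OF Q] by blast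
    then show ?thesis unfolding gm_def using False a D_V[OF Q D1] by simp
  qed
  define F where "F = {Q. MX Q \<and> a \<in> Q \<and> b \<in> Q}"
  have finF: "finite F" unfolding F_def using loc_fin[OF a] by (rule finite_subset[rotated]) blast
  have "\<forall>P\<in>F. \<exists>n x. n > 0 \<and> x \<noteq> 0 \<and> as P x (gm P ^ n) \<and> (\<forall>Q. MX Q \<and> Q \<noteq> P \<longrightarrow> as Q x 1)"
  proof
    fix P assume "P \<in> F"
    then have P: "MX P" "a \<in> P" "b \<in> P" unfolding F_def by auto
    obtain A where A: "super_homog D st A" "gm P \<in> A" "A \<subseteq> D" "\<forall>t\<in>A. t / gm P \<in> V P"
      "\<forall>Q. MX Q \<and> Q \<noteq> P \<longrightarrow> (\<exists>w\<in>A. w \<notin> Q)"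
      using construct[OF a b P gmab gmV[OF P(1), THEN conjunct1] gmV[OF P(1), THEN conjunct2]] by blast
    obtain n x where nx: "n > 0" "st (ipow D A n) = smul x D" using H A(1) by blast
    have "x \<in> D \<and> x \<noteq> 0 \<and> as P x (gm P ^ n) \<and> (\<forall>Q. MX Q \<and> Q \<noteq> P \<longrightarrow> as Q x 1)"
      using loc_facts[OF A(3) A(2) gmD(2) P(1) A(4) A(5) nx(2)] .
    then show "\<exists>n x. n > 0 \<and> x \<noteq> 0 \<and> as P x (gm P ^ n) \<and> (\<forall>Q. MX Q \<and> Q \<noteq> P \<longrightarrow> as Q x 1)"
      using nx(1) by blast
  qed
  then obtain nn xx where nnxx: "\<forall>P\<in>F. nn P > 0 \<and> xx P \<noteq> 0 \<and> as P (xx P) (gm P ^ nn P) \<and> (\<forall>Q. MX Q \<and> Q \<noteq> P \<longrightarrow> as Q (xx P) 1)"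
    by metis
  have comb: "F' \<subseteq> F \<Longrightarrow> \<exists>N\<ge>1. \<exists>X. X \<noteq> 0 \<and> (\<forall>Q. MX Q \<longrightarrow> (Q \<in> F' \<longrightarrow> as Q X (gm Q ^ N)) \<and> (Q \<notin> F' \<longrightarrow> as Q X 1))"
    if fin: "finite F'" for F'
    using fin
  proof (induct F')
    case empty
    have "\<forall>Q. MX Q \<longrightarrow> as Q 1 1" using as_refl by simp
    then have "\<forall>Q. MX Q \<longrightarrow> (Q \<in> {} \<longrightarrow> as Q 1 (gm Q ^ 1)) \<and> (Q \<notin> {} \<longrightarrow> as Q 1 1)" by simp
    then show ?case by (intro exI[of _ "1::nat"] conjI) (auto intro!: exI[of _ 1])
  next
    case (insert P F')
    then obtain N X where NX: "N \<ge> 1" "X \<noteq> 0" "\<forall>Q. MX Q \<longrightarrow> (Q \<in> F' \<longrightarrow> as Q X (gm Q ^ N)) \<and> (Q \<notin> F' \<longrightarrow> as Q X 1)"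
      by auto
    have PF: "P \<in> F" using insert by auto
    have xP: "nn P > 0" "xx P \<noteq> 0" "as P (xx P) (gm P ^ nn P)" "\<forall>Q. MX Q \<and> Q \<noteq> P \<longrightarrow> as Q (xx P) 1"
      using nnxx PF by auto
    define X' where "X' = X ^ nn P * xx P ^ N"
    have X'0: "X' \<noteq> 0" unfolding X'_def using NX xP by simp
    have "\<forall>Q. MX Q \<longrightarrow> (Q \<in> insert P F' \<longrightarrow> as Q X' (gm Q ^ (N * nn P))) \<and> (Q \<notin> insert P F' \<longrightarrow> as Q X' 1)"
    proof (intro allI impI conjI)
      fix Q assume Q: "MX Q" and QF: "Q \<in> insert P F'"
      show "as Q X' (gm Q ^ (N * nn P))"
      proof (cases "Q = P")
        case True
        have "as Q X 1" using NX Q insert True by blast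
        then have a1: "as Q (X ^ nn P) (1 ^ nn P)" using as_pow[OF Q] by blast
        have a2: "as Q (xx P ^ N) ((gm Q ^ nn P) ^ N)" using as_pow[OF Q] xP True by blast
        have e: "1 ^ nn P * (gm Q ^ nn P) ^ N = gm Q ^ (N * nn P)" by (simp add: power_mult[symmetric] mult.commute)
        have "as Q X' (1 ^ nn P * (gm Q ^ nn P) ^ N)" unfolding X'_def by (rule as_mult[OF a1 a2 Q])
        then show ?thesis by (simp only: e)
      next
        case False
        then have "Q \<in> F'" using QF by blast
        then have "as Q X (gm Q ^ N)" using NX Q by blast
        then have a1: "as Q (X ^ nn P) ((gm Q ^ N) ^ nn P)" using as_pow[OF Q] by blast
        have a2: "as Q (xx P ^ N) (1 ^ N)" using as_pow[OF Q] xP Q False by blast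
        have e: "(gm Q ^ N) ^ nn P * 1 ^ N = gm Q ^ (N * nn P)" by (simp add: power_mult)
        have "as Q X' ((gm Q ^ N) ^ nn P * 1 ^ N)" unfolding X'_def by (rule as_mult[OF a1 a2 Q])
        then show ?thesis by (simp only: e)
      qed
    next
      fix Q assume Q: "MX Q" and QF: "Q \<notin> insert P F'"
      have "as Q X 1" using NX Q QF by blast
      then have a1: "as Q (X ^ nn P) (1 ^ nn P)" using as_pow[OF Q] by blast
      have a2: "as Q (xx P ^ N) (1 ^ N)" using as_pow[OF Q] xP Q QF by blast
      have e: "1 ^ nn P * 1 ^ N = (1::'a)" by simp
      have "as Q X' (1 ^ nn P * 1 ^ N)" unfolding X'_def by (rule as_mult[OF a1 a2 Q])
      then show "as Q X' 1" by (simp only: e)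
    qed
    moreover have "N * nn P \<ge> 1" using NX xP by simp
    ultimately show ?case using X'0 by blast
  qed
  obtain N X where NX: "N \<ge> 1" "X \<noteq> 0" "\<forall>Q. MX Q \<longrightarrow> (Q \<in> F \<longrightarrow> as Q X (gm Q ^ N)) \<and> (Q \<notin> F \<longrightarrow> as Q X 1)"
    using comb[OF finF] by blast
  have asX: "as Q X (gm Q ^ N)" if Q: "MX Q" for Q
  proof (cases "Q \<in> F")
    case True then show ?thesis using NX Q by blast
  next
    case False
    then have X1: "as Q X 1" using NX Q by blast
    from False have "a \<notin> Q \<or> b \<notin> Q" using Q F_def by blast
    then obtain z where z: "z \<in> D" "z \<notin> Q" "z / gm Q \<in> V Q" using gmV[OF Q] a b by blast
    have "1 / gm Q = (z / gm Q) * (1 / z)" using MX_0[OF Q] z by auto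
    then have "1 / gm Q \<in> V Q" using V_mul[OF Q z(3) V_inv[OF Q z(1) z(2)]] by simp
    then have "as Q (gm Q) 1" unfolding as_def using D_V[OF Q gmD(1)] by simp
    then have "as Q (gm Q ^ N) (1 ^ N)" using as_pow[OF Q] by blast
    then have "as Q 1 (gm Q ^ N)" using as_sym by simp
    then show ?thesis using as_trans[OF Q X1] by simp
  qed
  define c where "c = (a * b) ^ N / X"
  have c0: "c \<noteq> 0" unfolding c_def using a b NX by simp
  have ca: "c / a ^ N \<in> D" and cb: "c / b ^ N \<in> D"
  proof -
    have "\<forall>Q. MX Q \<longrightarrow> c / a ^ N \<in> V Q"
    proof (intro allI impI)
      fix Q assume Q: "MX Q"
      have e: "c / a ^ N = (b / gm Q) ^ N * (gm Q ^ N / X)" unfolding c_def using a gmD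
        by (simp add: power_divide power_mult_distrib)
      have "gm Q ^ N / X \<in> V Q" using asX[OF Q] unfolding as_def by blast
      then show "c / a ^ N \<in> V Q" unfolding e using V_mul[OF Q V_pow[OF Q] ] gmV[OF Q] by blast
    qed
    then show "c / a ^ N \<in> D" using D_eq by blast
  next
    have "\<forall>Q. MX Q \<longrightarrow> c / b ^ N \<in> V Q"
    proof (intro allI impI)
      fix Q assume Q: "MX Q"
      have e: "c / b ^ N = (a / gm Q) ^ N * (gm Q ^ N / X)" unfolding c_def using b gmD
        by (simp add: power_divide power_mult_distrib)
      have "gm Q ^ N / X \<in> V Q" using asX[OF Q] unfolding as_def by blast
      then show "c / b ^ N \<in> V Q" unfolding e using V_mul[OF Q V_pow[OF Q] ] gmV[OF Q] by blast
    qed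
    then show "c / b ^ N \<in> D" using D_eq by blast
  qed
  have ce: "c = a ^ N * (c / a ^ N)" using a by simp
  have cD: "c \<in> D" by (subst ce) (rule Dmul[OF Dpow[OF a(1)] ca])
  have "smul (a ^ N) D \<inter> smul (b ^ N) D = smul c D"
  proof
    show "smul c D \<subseteq> smul (a ^ N) D \<inter> smul (b ^ N) D"
    proof
      fix y assume "y \<in> smul c D"
      then obtain d where d: "d \<in> D" "y = c * d" by (auto simp: smul_mem)
      have "y = a ^ N * ((c / a ^ N) * d)" "y = b ^ N * ((c / b ^ N) * d)" using d a b by simp_all
      moreover have "(c / a ^ N) * d \<in> D" "(c / b ^ N) * d \<in> D" using Dmul[OF ca d(1)] Dmul[OF cb d(1)] by (simp_all only:)
      ultimately show "y \<in> smul (a ^ N) D \<inter> smul (b ^ N) D" using smul_mem by blast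
    qed
  next
    show "smul (a ^ N) D \<inter> smul (b ^ N) D \<subseteq> smul c D"
    proof
      fix y assume "y \<in> smul (a ^ N) D \<inter> smul (b ^ N) D"
      then have "y \<in> smul (a ^ N) D" "y \<in> smul (b ^ N) D" by auto
      then obtain p q where pq: "p \<in> D" "y = a ^ N * p" "q \<in> D" "y = b ^ N * q" unfolding smul_mem by blast
      have "\<forall>Q. MX Q \<longrightarrow> y / c \<in> V Q"
      proof (intro allI impI)
        fix Q assume Q: "MX Q"
        have xv: "X / gm Q ^ N \<in> V Q" using asX[OF Q] unfolding as_def by blast
        show "y / c \<in> V Q"
        proof (cases "gm Q = a")
          case True
          have e: "y / c = q * (X / a ^ N)" unfolding c_def using pq(4) a b NX by (simp add: power_mult_distrib)
          have "X / a ^ N \<in> V Q" using xv True by simp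
          then show ?thesis unfolding e by (rule V_mul[OF Q D_V[OF Q pq(3)]])
        next
          case False
          then have gb: "gm Q = b" using gmab by blast
          have e: "y / c = p * (X / b ^ N)" unfolding c_def using pq(2) a b NX by (simp add: power_mult_distrib)
          have "X / b ^ N \<in> V Q" using xv gb by simp
          then show ?thesis unfolding e by (rule V_mul[OF Q D_V[OF Q pq(1)]])
        qed
      qed
      then have "y / c \<in> D" using D_eq by blast
      moreover have "y = c * (y / c)" using c0 by simp
      ultimately show "y \<in> smul c D" using smul_mem by blast
    qed
  qed
  then show "\<exists>n\<ge>1. \<exists>c\<in>D. smul (a ^ n) D \<inter> smul (b ^ n) D = smul c D" using NX(1) cD by blast
qed

end

theorem propositionQ8:
  fixes D :: "'a::field set" and st :: "'a set \<Rightarrow> 'a set"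
  assumes "is_quotient_field_of D"
    and "star_operation D st"
    and "finite_character D st"
    and "star_IRKT D st"
  shows "AGCD D \<longleftrightarrow>
    (\<forall>A. super_homog D st A \<longrightarrow> (\<exists>n>0. \<exists>x. st (ipow D A n) = smul x D))"
proof -
  interpret irkt D st using assms by (unfold_locales)
  show ?thesis using fwd bwd by blast
qed

end
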